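(* Let $\alpha,\beta>0$. For nonnegative, a.e.-finite, measurable functions $f,g$ on $(0,\infty)$ define $$ \underline{\mu}_{\alpha}(f) := \int_0^\infty\operatorname{ess\,sup}_{0<s\leq r} f(s)\,\frac{dr}{r^{1+\alpha}} \,, \qquad \overline{\mu}_{\beta}(f) := \int_0^\infty\operatorname{ess\,sup}_{r\leq s<\infty} f(s)\,\frac{dr}{r^{1-\beta}} \,, $$ $$ \overline{\nu}_\alpha(g) := \sup_{r>0} r^{\alpha} \int_r^\infty g(s) \,ds \,, \qquad \underline{\nu}_\beta(g) := \sup_{r>0} r^{-\beta} \int_0^r g(s) \,ds \,. $$ Then, for any nonnegative, measurable function $f$ on $(0,\infty)$, $$ \sup\left\{ \int_0^\infty fg\,dr:\ g\geq 0 \,,\ \overline\nu_\alpha(g) \leq 1 \right\} = \alpha\, \underline\mu_\alpha(f) \quad\text{and}\quad \sup\left\{ \int_0^\infty fg\,dr:\ g\geq 0\,,\ \underline\nu_\beta(g) \leq 1 \right\} = \beta\, \overline\mu_\beta(f) \,, $$ and conversely, for any nonnegative, measurable function $g$ on $(0,\infty)$, $$ \sup\left\{ \int_0^\infty fg\,dr:\ f\geq 0\,,\ \underline\mu_\alpha(f) \leq 1 \right\} = \alpha\, \overline\nu_\alpha(g) \quad\text{and}\quad \sup\left\{ \int_0^\infty fg\,dr:\ f\geq 0\,,\ \overline\mu_\beta(f) \leq 1 \right\} = \beta\, \underline\nu_\beta(g) \,. $$ (The suprema are over nonnegative measurable functions on $(0,\infty)$.) *)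

theory Defs
  imports "HOL-Analysis.Analysis" "HOL-Probability.Essential_Supremum"
begin

definition M0 :: "real measure" where
  "M0 = restrict_space lborel {0<..}"

text \<open>Nonnegative (real-valued, hence finite) measurable functions on (0,\<infinity>).\<close>
definition nonneg_meas :: "(real \<Rightarrow> real) \<Rightarrow> bool" where
  "nonneg_meas f \<longleftrightarrow> f \<in> borel_measurable M0 \<and> (\<forall>r>0. 0 \<le> f r)"

definition mu_low :: "real \<Rightarrow> (real \<Rightarrow> real) \<Rightarrow> ennreal" where
  "mu_low \<alpha> f = (\<integral>\<^sup>+ r. esssup (restrict_space lborel {0<..r}) (\<lambda>s. ennreal (f s))
                        * ennreal (1 / r powr (1 + \<alpha>)) \<partial>M0)"

definition mu_up :: "real \<Rightarrow> (real \<Rightarrow> real) \<Rightarrow> ennreal" where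
  "mu_up \<beta> f = (\<integral>\<^sup>+ r. esssup (restrict_space lborel {r..}) (\<lambda>s. ennreal (f s))
                        * ennreal (1 / r powr (1 - \<beta>)) \<partial>M0)"

definition nu_up :: "real \<Rightarrow> (real \<Rightarrow> real) \<Rightarrow> ennreal" where
  "nu_up \<alpha> g = (SUP r\<in>{0<..}. ennreal (r powr \<alpha>) * (\<integral>\<^sup>+ s\<in>{r<..}. ennreal (g s) \<partial>lborel))"

definition nu_low :: "real \<Rightarrow> (real \<Rightarrow> real) \<Rightarrow> ennreal" where
  "nu_low \<beta> g = (SUP r\<in>{0<..}. ennreal (r powr (- \<beta>)) * (\<integral>\<^sup>+ s\<in>{0<..r}. ennreal (g s) \<partial>lborel))"

definition pair_int :: "(real \<Rightarrow> real) \<Rightarrow> (real \<Rightarrow> real) \<Rightarrow> ennreal" where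
  "pair_int f g = (\<integral>\<^sup>+ r. ennreal (f r * g r) \<partial>M0)"

end

theory Submission
  imports Defs
begin


definition zr :: "(real \<Rightarrow> real) \<Rightarrow> real \<Rightarrow> real" where
  "zr f s = (if 0 < s then f s else 0)"

definition FA :: "(real \<Rightarrow> real) \<Rightarrow> real \<Rightarrow> ennreal" where
  "FA f r = esssup (restrict_space lborel {0<..r}) (\<lambda>s. ennreal (f s))"

definition HB :: "(real \<Rightarrow> real) \<Rightarrow> real \<Rightarrow> ennreal" where
  "HB f r = esssup (restrict_space lborel {r..}) (\<lambda>s. ennreal (f s))"

lemma esssup_cong_space:
  assumes "\<And>x. x \<in> space M \<Longrightarrow> f x = g x"
  shows "esssup M f = esssup M g"
proof (cases "f \<in> borel_measurable M")
  case True
  then have "g \<in> borel_measurable M" using measurable_cong[of M f g] assms by blast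
  then show ?thesis using True assms by (intro esssup_AE_cong) (auto intro: AE_I2)
next
  case False
  then have "g \<notin> borel_measurable M" using measurable_cong[of M f g] assms by blast
  then show ?thesis using False by (simp add: esssup_non_measurable)
qed

lemma zr_meas:
  assumes "nonneg_meas f"
  shows "zr f \<in> borel_measurable borel" "\<And>s. 0 \<le> zr f s"
proof -
  have "f \<in> borel_measurable (restrict_space lborel {0<..})"
    using assms unfolding nonneg_meas_def M0_def by auto
  then have "(\<lambda>x. if x \<in> {0<..} then f x else 0) \<in> borel_measurable lborel"
    by (subst (asm) measurable_restrict_space_iff) auto
  then show "zr f \<in> borel_measurable borel" unfolding zr_def by simp
  show "\<And>s. 0 \<le> zr f s" using assms unfolding zr_def nonneg_meas_def by auto
qed

lemma good_nonneg_meas: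
  assumes "f \<in> borel_measurable borel" "\<And>s. 0 \<le> f s"
  shows "nonneg_meas f"
  using assms unfolding nonneg_meas_def M0_def
  by (auto intro: measurable_restrict_space1)

lemma space_M0: "space M0 = {0<..}"
  unfolding M0_def by (simp add: space_restrict_space)

lemma pair_int_zr: "pair_int f g = pair_int (zr f) (zr g)"
  unfolding pair_int_def by (rule nn_integral_cong) (simp add: space_M0 zr_def)

lemma FA_zr: "FA f r = FA (zr f) r"
  unfolding FA_def by (rule esssup_cong_space) (simp add: space_restrict_space zr_def)

lemma HB_zr: "0 < r \<Longrightarrow> HB f r = HB (zr f) r"
  unfolding HB_def by (rule esssup_cong_space) (simp add: space_restrict_space zr_def)

lemma mu_low_FA: "mu_low a f = (\<integral>\<^sup>+ r. FA f r * ennreal (1 / r powr (1 + a)) \<partial>M0)"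
  unfolding mu_low_def FA_def ..

lemma mu_up_HB: "mu_up a f = (\<integral>\<^sup>+ r. HB f r * ennreal (1 / r powr (1 - a)) \<partial>M0)"
  unfolding mu_up_def HB_def ..

lemma mu_low_zr: "mu_low a f = mu_low a (zr f)"
  unfolding mu_low_FA FA_zr[of f] ..

lemma mu_up_zr: "mu_up a f = mu_up a (zr f)"
  unfolding mu_up_HB by (rule nn_integral_cong) (simp add: space_M0 HB_zr[symmetric])

lemma nu_up_zr: "nu_up a g = nu_up a (zr g)"
  unfolding nu_up_def
proof (intro SUP_cong refl)
  fix r :: real assume "r \<in> {0<..}"
  then have "(\<integral>\<^sup>+ s\<in>{r<..}. ennreal (g s) \<partial>lborel) = (\<integral>\<^sup>+ s\<in>{r<..}. ennreal (zr g s) \<partial>lborel)"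
    by (intro nn_integral_cong) (auto simp: zr_def split: split_indicator)
  then show "ennreal (r powr a) * (\<integral>\<^sup>+ s\<in>{r<..}. ennreal (g s) \<partial>lborel) = ennreal (r powr a) * (\<integral>\<^sup>+ s\<in>{r<..}. ennreal (zr g s) \<partial>lborel)"
    by simp
qed

lemma nu_low_zr: "nu_low a g = nu_low a (zr g)"
  unfolding nu_low_def
proof (intro SUP_cong refl)
  fix r :: real assume "r \<in> {0<..}"
  then have "(\<integral>\<^sup>+ s\<in>{0<..r}. ennreal (g s) \<partial>lborel) = (\<integral>\<^sup>+ s\<in>{0<..r}. ennreal (zr g s) \<partial>lborel)"
    by (intro nn_integral_cong) (auto simp: zr_def split: split_indicator)
  then show "ennreal (r powr (-a)) * (\<integral>\<^sup>+ s\<in>{0<..r}. ennreal (g s) \<partial>lborel) = ennreal (r powr (-a)) * (\<integral>\<^sup>+ s\<in>{0<..r}. ennreal (zr g s) \<partial>lborel)"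
    by simp
qed

lemma nn_integral_M0: "(\<integral>\<^sup>+ r. h r \<partial>M0) = (\<integral>\<^sup>+ r. h r * indicator {0<..} r \<partial>lborel)"
  unfolding M0_def by (rule nn_integral_restrict_space) auto



lemma upset_borel:
  fixes U :: "real set"
  assumes up: "\<And>x y. x \<in> U \<Longrightarrow> x \<le> y \<Longrightarrow> y \<in> U"
  shows "U \<in> sets borel"
proof (cases "U = {}")
  case False
  show ?thesis
  proof (cases "bdd_below U")
    case True
    define a where "a = Inf U"
    have 1: "a \<le> x" if "x \<in> U" for x using True that unfolding a_def by (simp add: cInf_lower)
    have 2: "x \<in> U" if "a < x" for x
    proof -
      obtain u where "u \<in> U" "u < x" using \<open>a < x\<close> False unfolding a_def by (meson cInf_lessD)
      then show ?thesis using up[of u x] by simp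
    qed
    show ?thesis
    proof (cases "a \<in> U")
      case True
      then have "U = {a..}" using 1 2 up[of a] by (auto simp: le_less)
      then show ?thesis by simp
    next
      case False
      then have "U = {a<..}" using 1 2 by (auto simp: less_le)
      then show ?thesis by simp
    qed
  next
    case False
    have "U = UNIV"
    proof safe
      fix y
      obtain x where "x \<in> U" "\<not> y \<le> x" using False unfolding bdd_below_def by auto
      then show "y \<in> U" using up[of x y] by simp
    qed simp
    then show ?thesis by simp
  qed
qed simp

lemma downset_borel:
  fixes U :: "real set"
  assumes down: "\<And>x y. x \<in> U \<Longrightarrow> y \<le> x \<Longrightarrow> y \<in> U"
  shows "U \<in> sets borel"
proof -
  have "uminus ` U \<in> sets borel"
  proof (rule upset_borel)
    fix x y :: real assume "x \<in> uminus ` U" "x \<le> y"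
    then obtain u where "u \<in> U" "x = - u" by auto
    then have "- y \<in> U" using down[of u "- y"] \<open>x \<le> y\<close> by auto
    then show "y \<in> uminus ` U" by (intro image_eqI[of _ _ "- y"]) auto
  qed
  then have "uminus -` (uminus ` U) \<inter> space borel \<in> sets borel"
  proof -
    have m: "(\<lambda>x::real. - x) \<in> borel_measurable borel" by measurable
    show ?thesis using measurable_sets[OF m \<open>uminus ` U \<in> sets borel\<close>] by simp
  qed
  moreover have "uminus -` (uminus ` U) = (U :: real set)" by auto
  ultimately show ?thesis by simp
qed

lemma esssup_restr_AE:
  fixes h :: "real \<Rightarrow> ennreal"
  assumes "A \<in> sets borel"
  shows "AE x in lborel. x \<in> A \<longrightarrow> h x \<le> esssup (restrict_space lborel A) h"
proof -
  have "AE x in restrict_space lborel A. h x \<le> esssup (restrict_space lborel A) h"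
    by (rule esssup_AE)
  then show ?thesis using assms by (subst (asm) AE_restrict_space_iff) auto
qed

lemma esssup_restr_le:
  fixes h :: "real \<Rightarrow> ennreal"
  assumes "A \<in> sets borel" "h \<in> borel_measurable borel"
    and "AE x in lborel. x \<in> A \<longrightarrow> h x \<le> L"
  shows "esssup (restrict_space lborel A) h \<le> L"
proof (rule esssup_I)
  show "h \<in> borel_measurable (restrict_space lborel A)"
    using assms by (intro measurable_restrict_space1) simp
  show "AE x in restrict_space lborel A. h x \<le> L"
    using assms by (subst AE_restrict_space_iff) auto
qed

lemma esssup_restr_mono:
  fixes h :: "real \<Rightarrow> ennreal"
  assumes "A \<in> sets borel" "B \<in> sets borel" "A \<subseteq> B" "h \<in> borel_measurable borel"
  shows "esssup (restrict_space lborel A) h \<le> esssup (restrict_space lborel B) h"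
proof (rule esssup_restr_le)
  show "AE x in lborel. x \<in> A \<longrightarrow> h x \<le> esssup (restrict_space lborel B) h"
    by (rule eventually_mono[OF esssup_restr_AE[OF assms(2), of h]]) (use assms(3) in blast)
qed (use assms in auto)

lemma esssup_restr_pos:
  fixes h :: "real \<Rightarrow> ennreal"
  assumes "A \<in> sets borel" "h \<in> borel_measurable borel" "c < esssup (restrict_space lborel A) h"
  shows "0 < emeasure lborel {x\<in>A. c < h x}"
proof -
  have "h \<in> borel_measurable (restrict_space lborel A)"
    using assms by (intro measurable_restrict_space1) simp
  from esssup_pos_measure[OF this assms(3)]
  have "0 < emeasure (restrict_space lborel A) {x \<in> space (restrict_space lborel A). c < h x}" .
  moreover have "{x \<in> space (restrict_space lborel A). c < h x} = {x\<in>A. c < h x}"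
    by (simp add: space_restrict_space)
  moreover have "emeasure (restrict_space lborel A) {x\<in>A. c < h x} = emeasure lborel {x\<in>A. c < h x}"
    using assms by (intro emeasure_restrict_space) auto
  ultimately show ?thesis by simp
qed

context
  fixes f :: "real \<Rightarrow> real"
  assumes fm[measurable]: "f \<in> borel_measurable borel"
begin

lemma FA_mono: "r \<le> r' \<Longrightarrow> FA f r \<le> FA f r'"
  unfolding FA_def by (rule esssup_restr_mono) auto

lemma FA_nonpos: "r \<le> 0 \<Longrightarrow> FA f r = 0"
  unfolding FA_def by (rule antisym, rule esssup_restr_le) auto

lemma FA_AE: "AE x in lborel. 0 < x \<and> x \<le> r \<longrightarrow> ennreal (f x) \<le> FA f r"
  unfolding FA_def using esssup_restr_AE[of "{0<..r}" "\<lambda>s. ennreal (f s)"] by simp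

lemma FA_C1:
  assumes "\<And>q. 0 < q \<Longrightarrow> q < b \<Longrightarrow> FA f q \<le> L"
  shows "AE s in lborel. 0 < s \<longrightarrow> s < b \<longrightarrow> ennreal (f s) \<le> L"
proof -
  have "AE s in lborel. \<forall>q\<in>\<rat>. 0 < s \<and> s \<le> q \<longrightarrow> ennreal (f s) \<le> FA f q"
    using FA_AE by (subst AE_ball_countable) (auto simp: countable_rat)
  then show ?thesis
  proof (rule eventually_mono, intro impI)
    fix s assume H: "\<forall>q\<in>\<rat>. 0 < s \<and> s \<le> q \<longrightarrow> ennreal (f s) \<le> FA f q" and "0 < s" "s < b"
    obtain q where "q \<in> \<rat>" "s < q" "q < b" using Rats_dense_in_real[OF \<open>s < b\<close>] by auto
    then show "ennreal (f s) \<le> L" using H assms[of q] \<open>0 < s\<close> by force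
  qed
qed

lemma FA_C2:
  assumes "\<And>q. 0 < q \<Longrightarrow> FA f q \<le> L"
  shows "AE s in lborel. 0 < s \<longrightarrow> ennreal (f s) \<le> L"
proof -
  have "AE s in lborel. \<forall>n::nat. 0 < s \<longrightarrow> s < real n \<longrightarrow> ennreal (f s) \<le> L"
    using FA_C1 assms by (subst AE_all_countable) auto
  then show ?thesis
  proof (rule eventually_mono, intro impI)
    fix s :: real assume "\<forall>n::nat. 0 < s \<longrightarrow> s < real n \<longrightarrow> ennreal (f s) \<le> L" "0 < s"
    moreover obtain n :: nat where "s < real n" using reals_Archimedean2 by blast
    ultimately show "ennreal (f s) \<le> L" by blast
  qed
qed

lemma FA_C3:
  assumes "\<And>q. 0 < q \<Longrightarrow> q < t \<Longrightarrow> FA f q \<le> L"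
  shows "FA f t \<le> L"
  unfolding FA_def
proof (rule esssup_restr_le)
  show "AE x in lborel. x \<in> {0<..t} \<longrightarrow> ennreal (f x) \<le> L"
  proof -
    have "AE s in lborel. 0 < s \<longrightarrow> s < t \<longrightarrow> ennreal (f s) \<le> L"
      by (rule FA_C1) (rule assms)
    then show ?thesis using AE_lborel_singleton[of t] by eventually_elim auto
  qed
qed auto

lemma FA_pos: "c < FA f t \<Longrightarrow> 0 < emeasure lborel {s\<in>{0<..t}. c < ennreal (f s)}"
  unfolding FA_def by (rule esssup_restr_pos) auto

lemma FA_meas[measurable]: "FA f \<in> borel_measurable borel"
proof (rule borel_measurableI_greater)
  fix y
  have "{x. y < FA f x} \<in> sets borel"
    by (rule upset_borel) (metis (mono_tags) mem_Collect_eq less_le_trans FA_mono)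
  then show "{x \<in> space borel. y < FA f x} \<in> sets borel" by simp
qed

lemma HB_antimono: "r \<le> r' \<Longrightarrow> HB f r' \<le> HB f r"
  unfolding HB_def by (rule esssup_restr_mono) auto

lemma HB_AE: "AE x in lborel. r \<le> x \<longrightarrow> ennreal (f x) \<le> HB f r"
  unfolding HB_def using esssup_restr_AE[of "{r..}" "\<lambda>s. ennreal (f s)"] by simp

lemma HB_C1:
  assumes "\<And>q. b < q \<Longrightarrow> HB f q \<le> L"
  shows "AE s in lborel. b < s \<longrightarrow> ennreal (f s) \<le> L"
proof -
  have "AE s in lborel. \<forall>q\<in>\<rat>. q \<le> s \<longrightarrow> ennreal (f s) \<le> HB f q"
    using HB_AE by (subst AE_ball_countable) (auto simp: countable_rat)
  then show ?thesis
  proof (rule eventually_mono, intro impI)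
    fix s assume H: "\<forall>q\<in>\<rat>. q \<le> s \<longrightarrow> ennreal (f s) \<le> HB f q" and "b < s"
    obtain q where "q \<in> \<rat>" "b < q" "q < s" using Rats_dense_in_real[OF \<open>b < s\<close>] by auto
    then show "ennreal (f s) \<le> L" using H assms[of q] by force
  qed
qed

lemma HB_C3:
  assumes "\<And>q. t < q \<Longrightarrow> HB f q \<le> L"
  shows "HB f t \<le> L"
  unfolding HB_def
proof (rule esssup_restr_le)
  show "AE x in lborel. x \<in> {t..} \<longrightarrow> ennreal (f x) \<le> L"
  proof -
    have "AE s in lborel. t < s \<longrightarrow> ennreal (f s) \<le> L"
      by (rule HB_C1) (rule assms)
    then show ?thesis using AE_lborel_singleton[of t] by eventually_elim auto
  qed
qed auto

lemma HB_pos: "c < HB f t \<Longrightarrow> 0 < emeasure lborel {s\<in>{t..}. c < ennreal (f s)}"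
  unfolding HB_def by (rule esssup_restr_pos) auto

lemma HB_meas[measurable]: "HB f \<in> borel_measurable borel"
proof (rule borel_measurableI_greater)
  fix y
  have "{x. y < HB f x} \<in> sets borel"
    by (rule downset_borel) (metis (mono_tags) mem_Collect_eq less_le_trans HB_antimono)
  then show "{x \<in> space borel. y < HB f x} \<in> sets borel" by simp
qed

end



definition wA :: "real \<Rightarrow> real \<Rightarrow> real" where "wA a r = a / r powr (1 + a)"
definition wB :: "real \<Rightarrow> real \<Rightarrow> real" where "wB b r = b / r powr (1 - b)"

lemma wA_meas[measurable]: "wA a \<in> borel_measurable borel"
  unfolding wA_def by measurable
lemma wB_meas[measurable]: "wB a \<in> borel_measurable borel"
  unfolding wB_def by measurable

lemma wA_nonneg: "0 \<le> a \<Longrightarrow> 0 \<le> wA a r"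
  unfolding wA_def by simp
lemma wB_nonneg: "0 \<le> a \<Longrightarrow> 0 \<le> wB a r"
  unfolding wB_def by simp

lemma ennreal_cancel_right:
  fixes X A B :: ennreal
  assumes "A = X + B" "B \<noteq> top"
  shows "X = A - B"
  using assms ennreal_add_diff_cancel_right by simp

lemma IA1:
  assumes a: "0 < a" and c: "0 < c"
  shows "(\<integral>\<^sup>+ r. ennreal (wA a r) * indicator {c..} r \<partial>lborel) = ennreal (c powr (- a))"
proof -
  have "((\<lambda>x. x powr (-1-a)) has_integral -(c powr ((-1-a)+1)) / ((-1-a)+1)) {c..}"
    using a c by (intro has_integral_powr_to_inf) auto
  then have "((\<lambda>x. a * x powr (-1-a)) has_integral a * (-(c powr ((-1-a)+1)) / ((-1-a)+1))) {c..}"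
    by (rule has_integral_mult_right)
  moreover have "a * (-(c powr ((-1-a)+1)) / ((-1-a)+1)) = c powr (- a)"
    using a by (simp add: field_simps)
  ultimately have H: "((\<lambda>x. a * x powr (-1-a)) has_integral c powr (- a)) {c..}" by simp
  have "(\<integral>\<^sup>+ x. ennreal (indicator {c..} x * (a * x powr (-1-a))) \<partial>lborel) = ennreal (c powr (- a))"
    by (rule nn_integral_has_integral_lebesgue[OF _ H]) (use a in simp)
  moreover have "ennreal (indicator {c..} x * (a * x powr (-1-a))) = ennreal (wA a x) * indicator {c..} x" for x
  proof (cases "c \<le> x")
    case True
    then have "x powr (-1-a) = 1 / x powr (1 + a)"
      using powr_minus_divide[of x "1 + a"] by simp
    then show ?thesis using True by (simp add: wA_def)
  qed simp
  ultimately show ?thesis by simp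
qed

lemma IA1':
  assumes a: "0 < a" and c: "0 < c"
  shows "(\<integral>\<^sup>+ r. ennreal (wA a r) * indicator {c<..} r \<partial>lborel) = ennreal (c powr (- a))"
proof -
  have "(\<integral>\<^sup>+ r. ennreal (wA a r) * indicator {c<..} r \<partial>lborel) = (\<integral>\<^sup>+ r. ennreal (wA a r) * indicator {c..} r \<partial>lborel)"
    by (rule nn_integral_cong_AE) (use AE_lborel_singleton[of c] in \<open>eventually_elim, auto split: split_indicator\<close>)
  then show ?thesis using IA1[OF assms] by simp
qed

lemma IA2:
  assumes a: "0 < a" and c: "0 < c" and cd: "c \<le> d"
  shows "(\<integral>\<^sup>+ r. ennreal (wA a r) * indicator {c..<d} r \<partial>lborel) = ennreal (c powr (- a) - d powr (- a))"
proof -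
  have "(\<integral>\<^sup>+ r. ennreal (wA a r) * indicator {c..} r \<partial>lborel) =
        (\<integral>\<^sup>+ r. ennreal (wA a r) * indicator {c..<d} r + ennreal (wA a r) * indicator {d..} r \<partial>lborel)"
    using cd by (intro nn_integral_cong) (auto split: split_indicator)
  also have "\<dots> = (\<integral>\<^sup>+ r. ennreal (wA a r) * indicator {c..<d} r \<partial>lborel) + (\<integral>\<^sup>+ r. ennreal (wA a r) * indicator {d..} r \<partial>lborel)"
    by (rule nn_integral_add) auto
  finally have "ennreal (c powr (- a)) = (\<integral>\<^sup>+ r. ennreal (wA a r) * indicator {c..<d} r \<partial>lborel) + ennreal (d powr (- a))"
    using IA1[OF a c] IA1[OF a, of d] c cd by simp
  then have "(\<integral>\<^sup>+ r. ennreal (wA a r) * indicator {c..<d} r \<partial>lborel) = ennreal (c powr (- a)) - ennreal (d powr (- a))"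
    by (intro ennreal_cancel_right) auto
  then show ?thesis by (simp add: ennreal_minus)
qed

lemma ennreal_unbounded_top:
  fixes X :: ennreal
  assumes "\<And>K. 0 < K \<Longrightarrow> ennreal K \<le> X"
  shows "X = top"
proof (rule ccontr)
  assume "X \<noteq> top"
  then obtain x where x: "X = ennreal x" "0 \<le> x" by (cases X) auto
  have "ennreal (x + 1) \<le> X" using assms[of "x+1"] x by simp
  then show False using x by (simp add: ennreal_le_iff)
qed

lemma IA3:
  assumes a: "0 < a"
  shows "(\<integral>\<^sup>+ r. ennreal (wA a r) * indicator {0<..} r \<partial>lborel) = top"
proof (rule ennreal_unbounded_top)
  fix K :: real assume K: "0 < K"
  define c where "c = K powr (- 1 / a)"
  have c: "0 < c" using K unfolding c_def by simp
  have "c powr (- a) = K" using K a unfolding c_def by (simp add: powr_powr)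
  then have "ennreal K = (\<integral>\<^sup>+ r. ennreal (wA a r) * indicator {c..} r \<partial>lborel)"
    using IA1[OF a c] by simp
  also have "\<dots> \<le> (\<integral>\<^sup>+ r. ennreal (wA a r) * indicator {0<..} r \<partial>lborel)"
    using c by (intro nn_integral_mono) (auto split: split_indicator)
  finally show "ennreal K \<le> (\<integral>\<^sup>+ r. ennreal (wA a r) * indicator {0<..} r \<partial>lborel)" .
qed

lemma IB1:
  assumes b: "0 < b" and c: "0 \<le> c"
  shows "(\<integral>\<^sup>+ r. ennreal (wB b r) * indicator {0<..c} r \<partial>lborel) = ennreal (c powr b)"
proof -
  have "((\<lambda>x. x powr (b-1)) has_integral (c powr ((b-1)+1) / ((b-1)+1))) {0..c}"
    using b c by (intro has_integral_powr_from_0) auto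
  then have "((\<lambda>x. b * x powr (b-1)) has_integral b * (c powr ((b-1)+1) / ((b-1)+1))) {0..c}"
    by (rule has_integral_mult_right)
  moreover have "b * (c powr ((b-1)+1) / ((b-1)+1)) = c powr b"
    using b by (simp add: field_simps)
  ultimately have H: "((\<lambda>x. b * x powr (b-1)) has_integral c powr b) {0..c}" by simp
  have "(\<integral>\<^sup>+ x. ennreal (indicator {0..c} x * (b * x powr (b-1))) \<partial>lborel) = ennreal (c powr b)"
    by (rule nn_integral_has_integral_lebesgue[OF _ H]) (use b in simp)
  moreover have "ennreal (indicator {0..c} x * (b * x powr (b-1))) = ennreal (wB b x) * indicator {0<..c} x" for x
  proof (cases "0 < x \<and> x \<le> c")
    case True
    then have "x powr (b-1) = 1 / x powr (1 - b)"
      using powr_minus_divide[of x "1 - b"] by simp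
    then show ?thesis using True by (simp add: wB_def)
  qed (auto simp: wB_def indicator_def)
  ultimately show ?thesis by simp
qed

lemma IB2:
  assumes b: "0 < b" and c: "0 \<le> c" and cd: "c \<le> d"
  shows "(\<integral>\<^sup>+ r. ennreal (wB b r) * indicator {c<..d} r \<partial>lborel) = ennreal (d powr b - c powr b)"
proof -
  have "(\<integral>\<^sup>+ r. ennreal (wB b r) * indicator {0<..d} r \<partial>lborel) =
        (\<integral>\<^sup>+ r. ennreal (wB b r) * indicator {c<..d} r + ennreal (wB b r) * indicator {0<..c} r \<partial>lborel)"
    using cd c by (intro nn_integral_cong) (auto split: split_indicator)
  also have "\<dots> = (\<integral>\<^sup>+ r. ennreal (wB b r) * indicator {c<..d} r \<partial>lborel) + (\<integral>\<^sup>+ r. ennreal (wB b r) * indicator {0<..c} r \<partial>lborel)"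
    by (rule nn_integral_add) auto
  finally have "ennreal (d powr b) = (\<integral>\<^sup>+ r. ennreal (wB b r) * indicator {c<..d} r \<partial>lborel) + ennreal (c powr b)"
    using IB1[OF b c] IB1[OF b, of d] c cd by simp
  then have "(\<integral>\<^sup>+ r. ennreal (wB b r) * indicator {c<..d} r \<partial>lborel) = ennreal (d powr b) - ennreal (c powr b)"
    by (intro ennreal_cancel_right) auto
  then show ?thesis by (simp add: ennreal_minus)
qed

lemma IB3:
  assumes b: "0 < b"
  shows "(\<integral>\<^sup>+ r. ennreal (wB b r) * indicator {0<..} r \<partial>lborel) = top"
proof (rule ennreal_unbounded_top)
  fix K :: real assume K: "0 < K"
  define c where "c = K powr (1 / b)"
  have c: "0 < c" using K unfolding c_def by simp
  have "c powr b = K" using K b unfolding c_def by (simp add: powr_powr)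
  then have "ennreal K = (\<integral>\<^sup>+ r. ennreal (wB b r) * indicator {0<..c} r \<partial>lborel)"
    using IB1[OF b] c by simp
  also have "\<dots> \<le> (\<integral>\<^sup>+ r. ennreal (wB b r) * indicator {0<..} r \<partial>lborel)"
    by (intro nn_integral_mono) (auto split: split_indicator)
  finally show "ennreal K \<le> (\<integral>\<^sup>+ r. ennreal (wB b r) * indicator {0<..} r \<partial>lborel)" .
qed



lemma emeasure_layer:
  fixes X :: ennreal
  shows "emeasure lborel {x::real. 0 \<le> x \<and> ennreal x < X} = X"
proof (cases "X = top")
  case True
  then have S: "{x::real. 0 \<le> x \<and> ennreal x < X} = {0..}" by auto
  have "emeasure lborel {0::real..} = top"
  proof (rule ennreal_unbounded_top)
    fix K :: real assume "0 < K"
    have 1: "ennreal K = emeasure lborel {0..K}" using \<open>0 < K\<close> by simp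
    have 2: "emeasure lborel {0..K} \<le> emeasure lborel {0::real..}" by (rule emeasure_mono) auto
    from 1 2 show "ennreal K \<le> emeasure lborel {0::real..}" by simp
  qed
  then show ?thesis using S True by simp
next
  case False
  then obtain x where x: "X = ennreal x" "0 \<le> x" by (cases X) auto
  then have "{y::real. 0 \<le> y \<and> ennreal y < X} = {0..<x}"
    by (auto simp: ennreal_less_iff)
  then show ?thesis using x by simp
qed

lemma nn_integral_zero_AE_lemma:
  fixes g :: "real \<Rightarrow> real"
  assumes [measurable]: "g \<in> borel_measurable borel"
    and "(\<integral>\<^sup>+ s. ennreal (g s) * indicator {r<..} s \<partial>lborel) = 0"
  shows "AE s in lborel. r < s \<longrightarrow> ennreal (g s) = 0"
proof -
  have "AE s in lborel. ennreal (g s) * indicator {r<..} s = 0"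
    using assms by (subst nn_integral_0_iff_AE[symmetric]) auto
  then show ?thesis by eventually_elim (auto split: split_indicator)
qed

lemma LemB_A:
  fixes f g :: "real \<Rightarrow> real" and a l :: real
  assumes a: "0 < a" and l: "0 \<le> l"
    and fm[measurable]: "f \<in> borel_measurable borel" and gm[measurable]: "g \<in> borel_measurable borel"
  shows "(\<integral>\<^sup>+ s. ennreal (g s) * indicator {s. 0 < s \<and> l < f s} s \<partial>lborel)
         \<le> nu_up a g * (\<integral>\<^sup>+ t. ennreal (wA a t) * indicator {t. 0 < t \<and> ennreal l < FA f t} t \<partial>lborel)"
    (is "?L \<le> ?nu * ?R")
proof -
  define U where "U = {t. 0 < t \<and> ennreal l < FA f t}"
  show ?thesis
  proof (cases "U = {}")
    case True
    have "FA f q \<le> ennreal l" if "0 < q" for q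
    proof -
      have "q \<notin> U" using True by simp
      then show ?thesis using that by (simp add: U_def not_less)
    qed
    then have "AE s in lborel. 0 < s \<longrightarrow> ennreal (f s) \<le> ennreal l" by (rule FA_C2[OF fm])
    then have "AE s in lborel. ennreal (g s) * indicator {s. 0 < s \<and> l < f s} s = 0"
      by eventually_elim (use l in \<open>auto split: split_indicator simp: ennreal_le_iff2\<close>)
    then have "?L = 0" by (subst nn_integral_0_iff_AE) auto
    then show ?thesis by simp
  next
    case False
    define A where "A = Inf U"
    have bdd: "bdd_below U" unfolding U_def by (rule bdd_belowI[of _ 0]) auto
    have A0: "0 \<le> A" unfolding A_def using False by (intro cInf_greatest) (auto simp: U_def)
    have below: "FA f t \<le> ennreal l" if "0 < t" "t < A" for t
    proof (rule ccontr)
      assume "\<not> FA f t \<le> ennreal l"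
      then have "t \<in> U" using that unfolding U_def by (auto simp: not_le)
      then have "A \<le> t" unfolding A_def using bdd by (simp add: cInf_lower)
      then show False using that by simp
    qed
    have above: "t \<in> U" if At: "A < t" for t
    proof -
      obtain u where u: "u \<in> U" "u < t" using cInf_lessD[OF False, of t] At unfolding A_def by blast
      then have "FA f u \<le> FA f t" by (intro FA_mono[OF fm]) simp
      then show ?thesis using u unfolding U_def by auto
    qed
    have AEb: "AE s in lborel. 0 < s \<longrightarrow> s < A \<longrightarrow> ennreal (f s) \<le> ennreal l"
      by (rule FA_C1[OF fm]) (rule below)
    have L1: "?L \<le> (\<integral>\<^sup>+ s. ennreal (g s) * indicator {A<..} s \<partial>lborel)"
    proof (rule nn_integral_mono_AE)
      show "AE s in lborel. ennreal (g s) * indicator {s. 0 < s \<and> l < f s} s \<le> ennreal (g s) * indicator {A<..} s"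
        using AEb AE_lborel_singleton[of A]
      proof eventually_elim
        case (elim s)
        show ?case
        proof (cases "0 < s \<and> l < f s")
          case True
          then have "\<not> s < A" using elim l by (auto simp: ennreal_le_iff2)
          then have "A < s" using elim by auto
          then show ?thesis using True by simp
        qed (auto split: split_indicator)
      qed
    qed
    show ?thesis
    proof (cases "0 < A")
      case True
      have "ennreal (A powr a) * (\<integral>\<^sup>+ s\<in>{A<..}. ennreal (g s) \<partial>lborel) \<le> ?nu"
        unfolding nu_up_def using True by (intro SUP_upper) auto
      then have "ennreal (A powr (-a)) * (ennreal (A powr a) * (\<integral>\<^sup>+ s\<in>{A<..}. ennreal (g s) \<partial>lborel))
                  \<le> ennreal (A powr (-a)) * ?nu"
        by (rule mult_left_mono) simp
      moreover have "ennreal (A powr (-a)) * ennreal (A powr a) = 1"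
        using True by (simp add: ennreal_mult'[symmetric] powr_add[symmetric])
      ultimately have L2: "(\<integral>\<^sup>+ s. ennreal (g s) * indicator {A<..} s \<partial>lborel) \<le> ennreal (A powr (-a)) * ?nu"
        by (simp add: mult.assoc[symmetric])
      have "ennreal (A powr (-a)) = (\<integral>\<^sup>+ t. ennreal (wA a t) * indicator {A<..} t \<partial>lborel)"
        using IA1'[OF a True] by simp
      also have "\<dots> \<le> ?R"
        using above True by (intro nn_integral_mono) (auto split: split_indicator simp: U_def)
      finally have "ennreal (A powr (-a)) * ?nu \<le> ?R * ?nu" by (rule mult_right_mono) simp
      then show ?thesis using L1 L2 by (simp add: mult.commute)
    next
      case False
      then have A: "A = 0" using A0 by simp
      show ?thesis
      proof (cases "?nu = 0")
        case True
        have "(\<integral>\<^sup>+ s. ennreal (g s) * indicator {r<..} s \<partial>lborel) = 0" if "0 < r" for r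
        proof -
          have "ennreal (r powr a) * (\<integral>\<^sup>+ s\<in>{r<..}. ennreal (g s) \<partial>lborel) \<le> ?nu"
            unfolding nu_up_def using that by (intro SUP_upper) auto
          then show ?thesis using True that by auto
        qed
        then have "AE s in lborel. \<forall>n::nat. inverse (Suc n) < s \<longrightarrow> ennreal (g s) = 0"
          by (subst AE_all_countable) (auto intro!: nn_integral_zero_AE_lemma)
        then have "AE s in lborel. 0 < s \<longrightarrow> ennreal (g s) = 0"
        proof (rule eventually_mono, intro impI)
          fix s :: real assume H: "\<forall>n::nat. inverse (Suc n) < s \<longrightarrow> ennreal (g s) = 0" and "0 < s"
          obtain n where "inverse (Suc n) < s" using reals_Archimedean[OF \<open>0 < s\<close>] by auto
          then show "ennreal (g s) = 0" using H by blast
        qed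
        then have "AE s in lborel. ennreal (g s) * indicator {s. 0 < s \<and> l < f s} s = 0"
          by eventually_elim (auto split: split_indicator)
        then have "?L = 0" by (subst nn_integral_0_iff_AE) auto
        then show ?thesis by simp
      next
        case False
        have "U = {0<..}" using above A unfolding U_def by auto
        then have "?R = top" using IA3[OF a] unfolding U_def by simp
        then have "?nu * ?R = top" using False by (simp add: ennreal_mult_eq_top_iff)
        then show ?thesis by simp
      qed
    qed
  qed
qed



lemma mu_low_lborel:
  assumes a: "0 < a" and fm[measurable]: "f \<in> borel_measurable borel"
  shows "ennreal a * mu_low a f = (\<integral>\<^sup>+ t. FA f t * (ennreal (wA a t) * indicator {0<..} t) \<partial>lborel)"
proof -
  have "ennreal a * mu_low a f = ennreal a * (\<integral>\<^sup>+ t. FA f t * ennreal (1 / t powr (1 + a)) * indicator {0<..} t \<partial>lborel)"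
    unfolding mu_low_FA nn_integral_M0 ..
  also have "\<dots> = (\<integral>\<^sup>+ t. ennreal a * (FA f t * ennreal (1 / t powr (1 + a)) * indicator {0<..} t) \<partial>lborel)"
    by (rule nn_integral_cmult[symmetric]) measurable
  also have "\<dots> = (\<integral>\<^sup>+ t. FA f t * (ennreal (wA a t) * indicator {0<..} t) \<partial>lborel)"
  proof (rule nn_integral_cong)
    fix t
    have "ennreal (wA a t) = ennreal a * ennreal (1 / t powr (1 + a))"
      using a by (simp add: wA_def ennreal_mult[symmetric])
    then show "ennreal a * (FA f t * ennreal (1 / t powr (1 + a)) * indicator {0<..} t) = FA f t * (ennreal (wA a t) * indicator {0<..} t)"
      by (simp add: mult_ac)
  qed
  finally show ?thesis .
qed

lemma UA:
  fixes f g :: "real \<Rightarrow> real" and a :: real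
  assumes a: "0 < a"
    and fm[measurable]: "f \<in> borel_measurable borel" and gm[measurable]: "g \<in> borel_measurable borel"
    and f0: "\<And>s. 0 \<le> f s" and g0: "\<And>s. 0 \<le> g s"
  shows "pair_int f g \<le> ennreal a * nu_up a g * mu_low a f"
proof -
  have PS: "pair_sigma_finite (lborel::real measure) (lborel::real measure)"
    by (simp add: pair_sigma_finite_def lborel.sigma_finite_measure_axioms)
  let ?nu = "nu_up a g"
  define h where "h = (\<lambda>x s. indicator {0..<f s} x * (ennreal (g s) * indicator {0<..} s) :: ennreal)"
  have SS: "sets (lborel \<Otimes>\<^sub>M lborel) = sets ((borel::real measure) \<Otimes>\<^sub>M (borel::real measure))"
    by (intro sets_pair_measure_cong) auto
  define K where "K = (\<lambda>x t. indicator {y. 0 \<le> y \<and> ennreal y < FA f t} x * (ennreal (wA a t) * indicator {0<..} t) :: ennreal)"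
  have "case_prod h \<in> borel_measurable (borel \<Otimes>\<^sub>M borel)"
  proof -
    have "case_prod h = (\<lambda>p. (if 0 \<le> fst p \<and> fst p < f (snd p) then 1 else 0) * (ennreal (g (snd p)) * (if 0 < snd p then 1 else 0)))"
      unfolding h_def by (auto simp: fun_eq_iff split: split_indicator)
    also have "\<dots> \<in> borel_measurable (borel \<Otimes>\<^sub>M borel)" by measurable
    finally show ?thesis .
  qed
  then have hm: "case_prod h \<in> borel_measurable (lborel \<Otimes>\<^sub>M lborel)"
    by (subst measurable_cong_sets[OF SS refl])
  have "case_prod K \<in> borel_measurable (borel \<Otimes>\<^sub>M borel)"
  proof -
    have "case_prod K = (\<lambda>p. (if 0 \<le> fst p \<and> ennreal (fst p) < FA f (snd p) then 1 else 0) * (ennreal (wA a (snd p)) * (if 0 < snd p then 1 else 0)))"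
      unfolding K_def by (auto simp: fun_eq_iff split: split_indicator)
    also have "\<dots> \<in> borel_measurable (borel \<Otimes>\<^sub>M borel)" by measurable
    finally show ?thesis .
  qed
  then have Km: "case_prod K \<in> borel_measurable (lborel \<Otimes>\<^sub>M lborel)"
    by (subst measurable_cong_sets[OF SS refl])
  have "pair_int f g = (\<integral>\<^sup>+ s. ennreal (f s * g s) * indicator {0<..} s \<partial>lborel)"
    unfolding pair_int_def nn_integral_M0 ..
  also have "\<dots> = (\<integral>\<^sup>+ s. (\<integral>\<^sup>+ x. h x s \<partial>lborel) \<partial>lborel)"
  proof (rule nn_integral_cong)
    fix s
    have "(\<integral>\<^sup>+ x. h x s \<partial>lborel) = (\<integral>\<^sup>+ x. indicator {0..<f s} x \<partial>lborel) * (ennreal (g s) * indicator {0<..} s)"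
      unfolding h_def by (rule nn_integral_multc) simp
    also have "\<dots> = ennreal (f s) * (ennreal (g s) * indicator {0<..} s)"
      using f0[of s] by simp
    finally show "ennreal (f s * g s) * indicator {0<..} s = (\<integral>\<^sup>+ x. h x s \<partial>lborel)"
      using f0[of s] g0[of s] by (simp add: ennreal_mult mult_ac)
  qed
  also have "\<dots> = (\<integral>\<^sup>+ x. (\<integral>\<^sup>+ s. h x s \<partial>lborel) \<partial>lborel)"
    by (rule pair_sigma_finite.Fubini'[OF PS hm])
  also have "\<dots> \<le> (\<integral>\<^sup>+ x. ?nu * (\<integral>\<^sup>+ t. K x t \<partial>lborel) \<partial>lborel)"
  proof (rule nn_integral_mono)
    fix x :: real
    show "(\<integral>\<^sup>+ s. h x s \<partial>lborel) \<le> ?nu * (\<integral>\<^sup>+ t. K x t \<partial>lborel)"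
    proof (cases "0 \<le> x")
      case True
      have "(\<integral>\<^sup>+ s. h x s \<partial>lborel) = (\<integral>\<^sup>+ s. ennreal (g s) * indicator {s. 0 < s \<and> x < f s} s \<partial>lborel)"
        unfolding h_def using True by (intro nn_integral_cong) (auto split: split_indicator)
      also have "\<dots> \<le> ?nu * (\<integral>\<^sup>+ t. ennreal (wA a t) * indicator {t. 0 < t \<and> ennreal x < FA f t} t \<partial>lborel)"
        by (rule LemB_A[OF a True fm gm])
      also have "(\<integral>\<^sup>+ t. ennreal (wA a t) * indicator {t. 0 < t \<and> ennreal x < FA f t} t \<partial>lborel) = (\<integral>\<^sup>+ t. K x t \<partial>lborel)"
        unfolding K_def using True by (intro nn_integral_cong) (auto split: split_indicator)
      finally show ?thesis .
    next
      case False
      then have "h x s = 0" for s unfolding h_def by (simp split: split_indicator)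
      then show ?thesis by simp
    qed
  qed
  also have "\<dots> = ?nu * (\<integral>\<^sup>+ x. (\<integral>\<^sup>+ t. K x t \<partial>lborel) \<partial>lborel)"
    by (rule nn_integral_cmult) (use Km in measurable)
  also have "(\<integral>\<^sup>+ x. (\<integral>\<^sup>+ t. K x t \<partial>lborel) \<partial>lborel) = (\<integral>\<^sup>+ t. (\<integral>\<^sup>+ x. K x t \<partial>lborel) \<partial>lborel)"
    by (rule pair_sigma_finite.Fubini'[symmetric, OF PS Km])
  also have "\<dots> = (\<integral>\<^sup>+ t. FA f t * (ennreal (wA a t) * indicator {0<..} t) \<partial>lborel)"
  proof (rule nn_integral_cong)
    fix t
    have "(\<integral>\<^sup>+ x. K x t \<partial>lborel) = (\<integral>\<^sup>+ x. indicator {y. 0 \<le> y \<and> ennreal y < FA f t} x \<partial>lborel) * (ennreal (wA a t) * indicator {0<..} t)"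
      unfolding K_def by (rule nn_integral_multc) measurable
    also have "\<dots> = FA f t * (ennreal (wA a t) * indicator {0<..} t)"
      by (subst nn_integral_indicator) (auto simp: emeasure_layer)
    finally show "(\<integral>\<^sup>+ x. K x t \<partial>lborel) = FA f t * (ennreal (wA a t) * indicator {0<..} t)" .
  qed
  also have "\<dots> = ennreal a * mu_low a f"
    using mu_low_lborel[OF a fm] by simp
  finally show ?thesis by (simp add: mult_ac)
qed



lemma LemB_B:
  fixes f g :: "real \<Rightarrow> real" and b l :: real
  assumes b: "0 < b" and l: "0 \<le> l"
    and fm[measurable]: "f \<in> borel_measurable borel" and gm[measurable]: "g \<in> borel_measurable borel"
  shows "(\<integral>\<^sup>+ s. ennreal (g s) * indicator {s. 0 < s \<and> l < f s} s \<partial>lborel)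
         \<le> nu_low b g * (\<integral>\<^sup>+ t. ennreal (wB b t) * indicator {t. 0 < t \<and> ennreal l < HB f t} t \<partial>lborel)"
    (is "?L \<le> ?nu * ?R")
proof -
  define U where "U = {t. 0 < t \<and> ennreal l < HB f t}"
  have zeroL: "?L = 0" if "AE s in lborel. 0 < s \<longrightarrow> ennreal (f s) \<le> ennreal l"
  proof -
    have "AE s in lborel. ennreal (g s) * indicator {s. 0 < s \<and> l < f s} s = 0"
      using that by eventually_elim (use l in \<open>auto split: split_indicator simp: ennreal_le_iff2\<close>)
    then show "?L = 0" by (subst nn_integral_0_iff_AE) auto
  qed
  show ?thesis
  proof (cases "U = {}")
    case True
    have "HB f q \<le> ennreal l" if "0 < q" for q
    proof -
      have "q \<notin> U" using True by simp
      then show ?thesis using that by (simp add: U_def not_less)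
    qed
    then have "AE s in lborel. 0 < s \<longrightarrow> ennreal (f s) \<le> ennreal l" by (rule HB_C1[OF fm])
    then show ?thesis using zeroL by simp
  next
    case False
    show ?thesis
    proof (cases "bdd_above U")
      case bdd: True
      define B where "B = Sup U"
      obtain u where u: "u \<in> U" using False by auto
      then have "u \<le> B" unfolding B_def using bdd by (simp add: cSup_upper)
      then have B0: "0 < B" using u unfolding U_def by simp
      have above: "HB f t \<le> ennreal l" if Bt: "B < t" for t
      proof (rule ccontr)
        assume "\<not> HB f t \<le> ennreal l"
        then have "t \<in> U" using Bt B0 unfolding U_def by (auto simp: not_le)
        then have "t \<le> B" unfolding B_def using bdd by (simp add: cSup_upper)
        then show False using Bt by simp
      qed
      have below: "t \<in> U" if tB: "0 < t" "t < B" for t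
      proof -
        obtain u where u: "u \<in> U" "t < u" using less_cSupD[OF False, of t] tB unfolding B_def by blast
        then have "HB f u \<le> HB f t" by (intro HB_antimono[OF fm]) simp
        then show ?thesis using u tB unfolding U_def by auto
      qed
      have AEb: "AE s in lborel. B < s \<longrightarrow> ennreal (f s) \<le> ennreal l"
        by (rule HB_C1[OF fm]) (rule above)
      have L1: "?L \<le> (\<integral>\<^sup>+ s. ennreal (g s) * indicator {0<..B} s \<partial>lborel)"
      proof (rule nn_integral_mono_AE)
        show "AE s in lborel. ennreal (g s) * indicator {s. 0 < s \<and> l < f s} s \<le> ennreal (g s) * indicator {0<..B} s"
          using AEb
        proof eventually_elim
          case (elim s)
          show ?case
          proof (cases "0 < s \<and> l < f s")
            case True
            then have "\<not> B < s" using elim l by (auto simp: ennreal_le_iff2)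
            then show ?thesis using True by simp
          qed (auto split: split_indicator)
        qed
      qed
      have "ennreal (B powr (-b)) * (\<integral>\<^sup>+ s\<in>{0<..B}. ennreal (g s) \<partial>lborel) \<le> ?nu"
        unfolding nu_low_def using B0 by (intro SUP_upper) auto
      then have "ennreal (B powr b) * (ennreal (B powr (-b)) * (\<integral>\<^sup>+ s\<in>{0<..B}. ennreal (g s) \<partial>lborel))
                  \<le> ennreal (B powr b) * ?nu"
        by (rule mult_left_mono) simp
      moreover have "ennreal (B powr b) * ennreal (B powr (-b)) = 1"
        using B0 by (simp add: ennreal_mult'[symmetric] powr_add[symmetric])
      ultimately have L2: "(\<integral>\<^sup>+ s. ennreal (g s) * indicator {0<..B} s \<partial>lborel) \<le> ennreal (B powr b) * ?nu"
        by (simp add: mult.assoc[symmetric])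
      have "ennreal (B powr b) = (\<integral>\<^sup>+ t. ennreal (wB b t) * indicator {0<..B} t \<partial>lborel)"
        using IB1[OF b, of B] B0 by simp
      also have "\<dots> \<le> ?R"
      proof (rule nn_integral_mono_AE)
        show "AE t in lborel. ennreal (wB b t) * indicator {0<..B} t \<le> ennreal (wB b t) * indicator {t. 0 < t \<and> ennreal l < HB f t} t"
          using AE_lborel_singleton[of B]
          by eventually_elim (use below in \<open>auto split: split_indicator simp: U_def\<close>)
      qed
      finally have "ennreal (B powr b) * ?nu \<le> ?R * ?nu" by (rule mult_right_mono) simp
      then show ?thesis using L1 L2 by (simp add: mult.commute)
    next
      case nbdd: False
      have U: "U = {0<..}"
      proof safe
        fix t :: real assume "0 < t"
        obtain u where u: "u \<in> U" "t < u" using nbdd unfolding bdd_above_def by (auto simp: not_le)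
        then have "HB f u \<le> HB f t" by (intro HB_antimono[OF fm]) simp
        then show "t \<in> U" using u \<open>0 < t\<close> unfolding U_def by auto
      qed (auto simp: U_def)
      show ?thesis
      proof (cases "?nu = 0")
        case True
        have Z: "(\<integral>\<^sup>+ s. ennreal (g s) * indicator {0<..r} s \<partial>lborel) = 0" if "0 < r" for r
        proof -
          have "ennreal (r powr (-b)) * (\<integral>\<^sup>+ s\<in>{0<..r}. ennreal (g s) \<partial>lborel) \<le> ?nu"
            unfolding nu_low_def using that by (intro SUP_upper) auto
          then show ?thesis using True that by auto
        qed
        have AEn: "AE s in lborel. ennreal (g s) * indicator {0<..real (Suc n)} s = 0" for n
        proof -
          have "(\<lambda>s. ennreal (g s) * indicator {0<..real (Suc n)} s) \<in> borel_measurable lborel" by measurable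
          from nn_integral_0_iff_AE[OF this] Z[of "real (Suc n)"] show ?thesis by simp
        qed
        then have "AE s in lborel. \<forall>n::nat. ennreal (g s) * indicator {0<..real (Suc n)} s = 0"
          using AEn by (subst AE_all_countable) blast
        then have "AE s in lborel. ennreal (g s) * indicator {s. 0 < s \<and> l < f s} s = 0"
        proof (rule eventually_mono)
          fix s :: real assume H: "\<forall>n::nat. ennreal (g s) * indicator {0<..real (Suc n)} s = 0"
          show "ennreal (g s) * indicator {s. 0 < s \<and> l < f s} s = 0"
          proof (cases "0 < s")
            case True
            obtain n :: nat where "s < real n" using reals_Archimedean2 by blast
            then have "ennreal (g s) * indicator {0<..real (Suc n)} s = ennreal (g s)" using True by simp
            then show ?thesis using H by (auto split: split_indicator)
          qed simp
        qed
        then have "?L = 0" by (subst nn_integral_0_iff_AE) auto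
        then show ?thesis by simp
      next
        case False
        have "?R = top" using IB3[OF b] U unfolding U_def by simp
        then have "?nu * ?R = top" using False by (simp add: ennreal_mult_eq_top_iff)
        then show ?thesis by simp
      qed
    qed
  qed
qed

lemma mu_up_lborel:
  assumes b: "0 < b" and fm[measurable]: "f \<in> borel_measurable borel"
  shows "ennreal b * mu_up b f = (\<integral>\<^sup>+ t. HB f t * (ennreal (wB b t) * indicator {0<..} t) \<partial>lborel)"
proof -
  have "ennreal b * mu_up b f = ennreal b * (\<integral>\<^sup>+ t. HB f t * ennreal (1 / t powr (1 - b)) * indicator {0<..} t \<partial>lborel)"
    unfolding mu_up_HB nn_integral_M0 ..
  also have "\<dots> = (\<integral>\<^sup>+ t. ennreal b * (HB f t * ennreal (1 / t powr (1 - b)) * indicator {0<..} t) \<partial>lborel)"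
    by (rule nn_integral_cmult[symmetric]) measurable
  also have "\<dots> = (\<integral>\<^sup>+ t. HB f t * (ennreal (wB b t) * indicator {0<..} t) \<partial>lborel)"
  proof (rule nn_integral_cong)
    fix t
    have "ennreal (wB b t) = ennreal b * ennreal (1 / t powr (1 - b))"
      using b by (simp add: wB_def ennreal_mult[symmetric])
    then show "ennreal b * (HB f t * ennreal (1 / t powr (1 - b)) * indicator {0<..} t) = HB f t * (ennreal (wB b t) * indicator {0<..} t)"
      by (simp add: mult_ac)
  qed
  finally show ?thesis .
qed

lemma UB:
  fixes f g :: "real \<Rightarrow> real" and b :: real
  assumes b: "0 < b"
    and fm[measurable]: "f \<in> borel_measurable borel" and gm[measurable]: "g \<in> borel_measurable borel"
    and f0: "\<And>s. 0 \<le> f s" and g0: "\<And>s. 0 \<le> g s"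
  shows "pair_int f g \<le> ennreal b * nu_low b g * mu_up b f"
proof -
  have PS: "pair_sigma_finite (lborel::real measure) (lborel::real measure)"
    by (simp add: pair_sigma_finite_def lborel.sigma_finite_measure_axioms)
  let ?nu = "nu_low b g"
  define h where "h = (\<lambda>x s. indicator {0..<f s} x * (ennreal (g s) * indicator {0<..} s) :: ennreal)"
  have SS: "sets (lborel \<Otimes>\<^sub>M lborel) = sets ((borel::real measure) \<Otimes>\<^sub>M (borel::real measure))"
    by (intro sets_pair_measure_cong) auto
  define K where "K = (\<lambda>x t. indicator {y. 0 \<le> y \<and> ennreal y < HB f t} x * (ennreal (wB b t) * indicator {0<..} t) :: ennreal)"
  have "case_prod h \<in> borel_measurable (borel \<Otimes>\<^sub>M borel)"
  proof -
    have "case_prod h = (\<lambda>p. (if 0 \<le> fst p \<and> fst p < f (snd p) then 1 else 0) * (ennreal (g (snd p)) * (if 0 < snd p then 1 else 0)))"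
      unfolding h_def by (auto simp: fun_eq_iff split: split_indicator)
    also have "\<dots> \<in> borel_measurable (borel \<Otimes>\<^sub>M borel)" by measurable
    finally show ?thesis .
  qed
  then have hm: "case_prod h \<in> borel_measurable (lborel \<Otimes>\<^sub>M lborel)"
    by (subst measurable_cong_sets[OF SS refl])
  have "case_prod K \<in> borel_measurable (borel \<Otimes>\<^sub>M borel)"
  proof -
    have "case_prod K = (\<lambda>p. (if 0 \<le> fst p \<and> ennreal (fst p) < HB f (snd p) then 1 else 0) * (ennreal (wB b (snd p)) * (if 0 < snd p then 1 else 0)))"
      unfolding K_def by (auto simp: fun_eq_iff split: split_indicator)
    also have "\<dots> \<in> borel_measurable (borel \<Otimes>\<^sub>M borel)" by measurable
    finally show ?thesis .
  qed
  then have Km: "case_prod K \<in> borel_measurable (lborel \<Otimes>\<^sub>M lborel)"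
    by (subst measurable_cong_sets[OF SS refl])
  have "pair_int f g = (\<integral>\<^sup>+ s. ennreal (f s * g s) * indicator {0<..} s \<partial>lborel)"
    unfolding pair_int_def nn_integral_M0 ..
  also have "\<dots> = (\<integral>\<^sup>+ s. (\<integral>\<^sup>+ x. h x s \<partial>lborel) \<partial>lborel)"
  proof (rule nn_integral_cong)
    fix s
    have "(\<integral>\<^sup>+ x. h x s \<partial>lborel) = (\<integral>\<^sup>+ x. indicator {0..<f s} x \<partial>lborel) * (ennreal (g s) * indicator {0<..} s)"
      unfolding h_def by (rule nn_integral_multc) simp
    also have "\<dots> = ennreal (f s) * (ennreal (g s) * indicator {0<..} s)"
      using f0[of s] by simp
    finally show "ennreal (f s * g s) * indicator {0<..} s = (\<integral>\<^sup>+ x. h x s \<partial>lborel)"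
      using f0[of s] g0[of s] by (simp add: ennreal_mult mult_ac)
  qed
  also have "\<dots> = (\<integral>\<^sup>+ x. (\<integral>\<^sup>+ s. h x s \<partial>lborel) \<partial>lborel)"
    by (rule pair_sigma_finite.Fubini'[OF PS hm])
  also have "\<dots> \<le> (\<integral>\<^sup>+ x. ?nu * (\<integral>\<^sup>+ t. K x t \<partial>lborel) \<partial>lborel)"
  proof (rule nn_integral_mono)
    fix x :: real
    show "(\<integral>\<^sup>+ s. h x s \<partial>lborel) \<le> ?nu * (\<integral>\<^sup>+ t. K x t \<partial>lborel)"
    proof (cases "0 \<le> x")
      case True
      have "(\<integral>\<^sup>+ s. h x s \<partial>lborel) = (\<integral>\<^sup>+ s. ennreal (g s) * indicator {s. 0 < s \<and> x < f s} s \<partial>lborel)"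
        unfolding h_def using True by (intro nn_integral_cong) (auto split: split_indicator)
      also have "\<dots> \<le> ?nu * (\<integral>\<^sup>+ t. ennreal (wB b t) * indicator {t. 0 < t \<and> ennreal x < HB f t} t \<partial>lborel)"
        by (rule LemB_B[OF b True fm gm])
      also have "(\<integral>\<^sup>+ t. ennreal (wB b t) * indicator {t. 0 < t \<and> ennreal x < HB f t} t \<partial>lborel) = (\<integral>\<^sup>+ t. K x t \<partial>lborel)"
        unfolding K_def using True by (intro nn_integral_cong) (auto split: split_indicator)
      finally show ?thesis .
    next
      case False
      then have "h x s = 0" for s unfolding h_def by (simp split: split_indicator)
      then show ?thesis by simp
    qed
  qed
  also have "\<dots> = ?nu * (\<integral>\<^sup>+ x. (\<integral>\<^sup>+ t. K x t \<partial>lborel) \<partial>lborel)"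
    by (rule nn_integral_cmult) (use Km in measurable)
  also have "(\<integral>\<^sup>+ x. (\<integral>\<^sup>+ t. K x t \<partial>lborel) \<partial>lborel) = (\<integral>\<^sup>+ t. (\<integral>\<^sup>+ x. K x t \<partial>lborel) \<partial>lborel)"
    by (rule pair_sigma_finite.Fubini'[symmetric, OF PS Km])
  also have "\<dots> = (\<integral>\<^sup>+ t. HB f t * (ennreal (wB b t) * indicator {0<..} t) \<partial>lborel)"
  proof (rule nn_integral_cong)
    fix t
    have "(\<integral>\<^sup>+ x. K x t \<partial>lborel) = (\<integral>\<^sup>+ x. indicator {y. 0 \<le> y \<and> ennreal y < HB f t} x \<partial>lborel) * (ennreal (wB b t) * indicator {0<..} t)"
      unfolding K_def by (rule nn_integral_multc) measurable
    also have "\<dots> = HB f t * (ennreal (wB b t) * indicator {0<..} t)"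
      by (subst nn_integral_indicator) (auto simp: emeasure_layer)
    finally show "(\<integral>\<^sup>+ x. K x t \<partial>lborel) = HB f t * (ennreal (wB b t) * indicator {0<..} t)" .
  qed
  also have "\<dots> = ennreal b * mu_up b f"
    using mu_up_lborel[OF b fm] by simp
  finally show ?thesis by (simp add: mult_ac)
qed



lemma le_one_from_mult:
  fixes X :: ennreal and a :: real
  assumes "0 < a" "ennreal a * X \<le> ennreal a"
  shows "X \<le> 1"
  using assms ennreal_mult_le_mult_iff[of "ennreal a" X 1] by simp

lemma LB_conv_A:
  fixes g :: "real \<Rightarrow> real" and a :: real
  assumes a: "0 < a" and gm[measurable]: "g \<in> borel_measurable borel" and g0: "\<And>s. 0 \<le> g s"
  shows "ennreal a * nu_up a g \<le> Sup {pair_int f g | f. nonneg_meas f \<and> mu_low a f \<le> 1}"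
proof -
  have "ennreal a * nu_up a g = (SUP r\<in>{0<..}. ennreal a * (ennreal (r powr a) * (\<integral>\<^sup>+ s\<in>{r<..}. ennreal (g s) \<partial>lborel)))"
    unfolding nu_up_def by (rule SUP_mult_left_ennreal)
  also have "\<dots> \<le> Sup {pair_int f g | f. nonneg_meas f \<and> mu_low a f \<le> 1}"
  proof (rule SUP_least)
    fix r :: real assume "r \<in> {0<..}"
    then have r: "0 < r" by simp
    define c where "c = a * r powr a"
    have c0: "0 \<le> c" using a unfolding c_def by simp
    define f where "f = (\<lambda>s::real. c * indicator {r<..} s)"
    have fm[measurable]: "f \<in> borel_measurable borel" unfolding f_def by measurable
    have f0: "\<And>s. 0 \<le> f s" unfolding f_def using c0 by simp
    have FAle: "FA f t \<le> ennreal c * indicator {r<..} t" for t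
      unfolding FA_def
    proof (rule esssup_restr_le)
      show "AE x in lborel. x \<in> {0<..t} \<longrightarrow> ennreal (f x) \<le> ennreal c * indicator {r<..} t"
        by (rule AE_I2) (auto simp: f_def split: split_indicator)
    qed auto
    have "ennreal a * mu_low a f = (\<integral>\<^sup>+ t. FA f t * (ennreal (wA a t) * indicator {0<..} t) \<partial>lborel)"
      by (rule mu_low_lborel[OF a fm])
    also have "\<dots> \<le> (\<integral>\<^sup>+ t. ennreal c * (ennreal (wA a t) * indicator {r<..} t) \<partial>lborel)"
    proof (rule nn_integral_mono)
      fix t
      have "FA f t * (ennreal (wA a t) * indicator {0<..} t) \<le> ennreal c * indicator {r<..} t * (ennreal (wA a t) * indicator {0<..} t)"
        by (rule mult_right_mono[OF FAle]) simp
      also have "\<dots> = ennreal c * (ennreal (wA a t) * indicator {r<..} t)"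
        using r by (auto split: split_indicator)
      finally show "FA f t * (ennreal (wA a t) * indicator {0<..} t) \<le> ennreal c * (ennreal (wA a t) * indicator {r<..} t)" .
    qed
    also have "\<dots> = ennreal c * ennreal (r powr (-a))"
      using IA1'[OF a r] by (subst nn_integral_cmult) auto
    also have "\<dots> = ennreal a"
      using a r c0 unfolding c_def by (simp add: ennreal_mult[symmetric] mult.assoc powr_add[symmetric])
    finally have "mu_low a f \<le> 1" by (rule le_one_from_mult[OF a])
    moreover have "nonneg_meas f" by (rule good_nonneg_meas[OF fm f0])
    ultimately have mem: "pair_int f g \<in> {pair_int f g | f. nonneg_meas f \<and> mu_low a f \<le> 1}" by (intro CollectI exI[of _ f] conjI refl)
    have "pair_int f g = (\<integral>\<^sup>+ s. ennreal c * (ennreal (g s) * indicator {r<..} s) \<partial>lborel)"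
      unfolding pair_int_def nn_integral_M0
      using r c0 g0 by (intro nn_integral_cong) (auto simp: f_def ennreal_mult split: split_indicator)
    also have "\<dots> = ennreal c * (\<integral>\<^sup>+ s\<in>{r<..}. ennreal (g s) \<partial>lborel)"
      by (rule nn_integral_cmult) measurable
    also have "\<dots> = ennreal a * (ennreal (r powr a) * (\<integral>\<^sup>+ s\<in>{r<..}. ennreal (g s) \<partial>lborel))"
      using a unfolding c_def by (simp add: ennreal_mult mult.assoc)
    finally show "ennreal a * (ennreal (r powr a) * (\<integral>\<^sup>+ s\<in>{r<..}. ennreal (g s) \<partial>lborel)) \<le> Sup {pair_int f g | f. nonneg_meas f \<and> mu_low a f \<le> 1}"
      using Sup_upper[OF mem] by simp
  qed
  finally show ?thesis .
qed

lemma LB_conv_B: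
  fixes g :: "real \<Rightarrow> real" and b :: real
  assumes b: "0 < b" and gm[measurable]: "g \<in> borel_measurable borel" and g0: "\<And>s. 0 \<le> g s"
  shows "ennreal b * nu_low b g \<le> Sup {pair_int f g | f. nonneg_meas f \<and> mu_up b f \<le> 1}"
proof -
  have "ennreal b * nu_low b g = (SUP r\<in>{0<..}. ennreal b * (ennreal (r powr (-b)) * (\<integral>\<^sup>+ s\<in>{0<..r}. ennreal (g s) \<partial>lborel)))"
    unfolding nu_low_def by (rule SUP_mult_left_ennreal)
  also have "\<dots> \<le> Sup {pair_int f g | f. nonneg_meas f \<and> mu_up b f \<le> 1}"
  proof (rule SUP_least)
    fix r :: real assume "r \<in> {0<..}"
    then have r: "0 < r" by simp
    define c where "c = b * r powr (-b)"
    have c0: "0 \<le> c" using b unfolding c_def by simp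
    define f where "f = (\<lambda>s::real. c * indicator {0<..r} s)"
    have fm[measurable]: "f \<in> borel_measurable borel" unfolding f_def by measurable
    have f0: "\<And>s. 0 \<le> f s" unfolding f_def using c0 by simp
    have HBle: "HB f t \<le> ennreal c * indicator {..r} t" for t
      unfolding HB_def
    proof (rule esssup_restr_le)
      show "AE x in lborel. x \<in> {t..} \<longrightarrow> ennreal (f x) \<le> ennreal c * indicator {..r} t"
        by (rule AE_I2) (auto simp: f_def split: split_indicator)
    qed auto
    have "ennreal b * mu_up b f = (\<integral>\<^sup>+ t. HB f t * (ennreal (wB b t) * indicator {0<..} t) \<partial>lborel)"
      by (rule mu_up_lborel[OF b fm])
    also have "\<dots> \<le> (\<integral>\<^sup>+ t. ennreal c * (ennreal (wB b t) * indicator {0<..r} t) \<partial>lborel)"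
    proof (rule nn_integral_mono)
      fix t
      have "HB f t * (ennreal (wB b t) * indicator {0<..} t) \<le> ennreal c * indicator {..r} t * (ennreal (wB b t) * indicator {0<..} t)"
        by (rule mult_right_mono[OF HBle]) simp
      also have "\<dots> = ennreal c * (ennreal (wB b t) * indicator {0<..r} t)"
        by (auto split: split_indicator)
      finally show "HB f t * (ennreal (wB b t) * indicator {0<..} t) \<le> ennreal c * (ennreal (wB b t) * indicator {0<..r} t)" .
    qed
    also have "\<dots> = ennreal c * ennreal (r powr b)"
      using IB1[OF b, of r] r by (subst nn_integral_cmult) auto
    also have "\<dots> = ennreal b"
      using b r c0 unfolding c_def by (simp add: ennreal_mult[symmetric] mult.assoc powr_add[symmetric])
    finally have "mu_up b f \<le> 1" by (rule le_one_from_mult[OF b])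
    moreover have "nonneg_meas f" by (rule good_nonneg_meas[OF fm f0])
    ultimately have mem: "pair_int f g \<in> {pair_int f g | f. nonneg_meas f \<and> mu_up b f \<le> 1}" by (intro CollectI exI[of _ f] conjI refl)
    have "pair_int f g = (\<integral>\<^sup>+ s. ennreal c * (ennreal (g s) * indicator {0<..r} s) \<partial>lborel)"
      unfolding pair_int_def nn_integral_M0
      using r c0 g0 by (intro nn_integral_cong) (auto simp: f_def ennreal_mult split: split_indicator)
    also have "\<dots> = ennreal c * (\<integral>\<^sup>+ s\<in>{0<..r}. ennreal (g s) \<partial>lborel)"
      by (rule nn_integral_cmult) measurable
    also have "\<dots> = ennreal b * (ennreal (r powr (-b)) * (\<integral>\<^sup>+ s\<in>{0<..r}. ennreal (g s) \<partial>lborel))"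
      using b unfolding c_def by (simp add: ennreal_mult mult.assoc)
    finally show "ennreal b * (ennreal (r powr (-b)) * (\<integral>\<^sup>+ s\<in>{0<..r}. ennreal (g s) \<partial>lborel)) \<le> Sup {pair_int f g | f. nonneg_meas f \<and> mu_up b f \<le> 1}"
      using Sup_upper[OF mem] by simp
  qed
  finally show ?thesis .
qed



lemma APPROX:
  fixes X :: ennreal
  shows "\<exists>u::nat \<Rightarrow> real. incseq u \<and> (\<forall>k. 0 \<le> u k) \<and> (\<forall>k. X = 0 \<or> ennreal (u k) < X) \<and> (SUP k. ennreal (u k)) = X"
proof (cases "X = 0")
  case True
  then show ?thesis by (intro exI[of _ "\<lambda>k. 0"]) (auto simp: incseq_def)
next
  case False
  have "0 \<in> {..<X}" using False by (simp add: zero_less_iff_neq_zero)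
  then have "{..<X} \<noteq> {}" by blast
  from ennreal_Sup_countable_SUP[OF this] obtain F :: "nat \<Rightarrow> ennreal"
    where F: "incseq F" "range F \<subseteq> {..<X}" "Sup {..<X} = (SUP i. F i)" by blast
  have FX: "F k < X" for k using F(2) by auto
  then have Ftop: "F k < top" for k using top_greatest le_less_trans by (metis less_le_trans top_greatest)
  define u where "u k = enn2real (F k)" for k
  have uF: "ennreal (u k) = F k" for k unfolding u_def using Ftop[of k] by simp
  have "incseq u" unfolding u_def incseq_def
    using F(1) Ftop by (auto simp: incseq_def intro!: enn2real_mono)
  moreover have "(SUP k. ennreal (u k)) = X" unfolding uF using F(3) by simp
  ultimately show ?thesis using FX uF by (intro exI[of _ u]) (auto simp: u_def)
qed

definition gcon :: "nat set \<Rightarrow> (nat \<Rightarrow> real set) \<Rightarrow> (nat \<Rightarrow> real) \<Rightarrow> real \<Rightarrow> real" where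
  "gcon J E m s = (\<Sum>j\<in>J. (m j / measure lborel (E j)) * indicator (E j) s)"

context
  fixes J :: "nat set" and E :: "nat \<Rightarrow> real set" and m c :: "nat \<Rightarrow> real" and f :: "real \<Rightarrow> real"
  assumes J: "finite J"
    and Em[measurable]: "\<And>j. j \<in> J \<Longrightarrow> E j \<in> sets borel"
    and Epos: "\<And>j. j \<in> J \<Longrightarrow> 0 < emeasure lborel (E j)"
    and Efin: "\<And>j. j \<in> J \<Longrightarrow> emeasure lborel (E j) < top"
    and Esub: "\<And>j. j \<in> J \<Longrightarrow> E j \<subseteq> {0<..}"
    and Ec: "\<And>j s. j \<in> J \<Longrightarrow> s \<in> E j \<Longrightarrow> c j < f s"
    and m0: "\<And>j. j \<in> J \<Longrightarrow> 0 \<le> m j"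
    and c0: "\<And>j. j \<in> J \<Longrightarrow> 0 \<le> c j"
begin

lemma emeasure_E: "j \<in> J \<Longrightarrow> emeasure lborel (E j) = ennreal (measure lborel (E j))"
  using Efin[of j] by (intro emeasure_eq_ennreal_measure) auto

lemma mu_pos: "j \<in> J \<Longrightarrow> 0 < measure lborel (E j)"
  using Epos[of j] emeasure_E[of j] by simp

lemma gcon_meas: "gcon J E m \<in> borel_measurable borel"
proof -
  have "(\<lambda>s. \<Sum>j\<in>J. (m j / measure lborel (E j)) * indicator (E j) s) \<in> borel_measurable borel"
    by (intro borel_measurable_sum) (auto intro: borel_measurable_times borel_measurable_indicator)
  then show ?thesis unfolding gcon_def[abs_def] .
qed

lemma gcon_nonneg: "0 \<le> gcon J E m s"
  unfolding gcon_def using m0 mu_pos by (intro sum_nonneg) auto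

lemma gcon_pair: "(\<Sum>j\<in>J. ennreal (c j * m j)) \<le> pair_int f (gcon J E m)"
proof -
  let ?k = "\<lambda>j. m j / measure lborel (E j)"
  have "(\<Sum>j\<in>J. ennreal (c j * m j)) = (\<Sum>j\<in>J. ennreal (c j * ?k j) * emeasure lborel (E j))"
  proof (rule sum.cong[OF refl])
    fix j assume j: "j \<in> J"
    have "c j * m j = c j * ?k j * measure lborel (E j)" using mu_pos[OF j] by simp
    then show "ennreal (c j * m j) = ennreal (c j * ?k j) * emeasure lborel (E j)"
      using j emeasure_E[OF j] c0[OF j] m0[OF j] mu_pos[OF j] by (simp add: ennreal_mult[symmetric])
  qed
  also have "\<dots> = (\<Sum>j\<in>J. (\<integral>\<^sup>+ s. ennreal (c j * ?k j) * indicator (E j) s \<partial>lborel))"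
    using Em by (intro sum.cong refl nn_integral_cmult_indicator[symmetric]) auto
  also have "\<dots> = (\<integral>\<^sup>+ s. (\<Sum>j\<in>J. ennreal (c j * ?k j) * indicator (E j) s) \<partial>lborel)"
    by (rule nn_integral_sum[symmetric]) (use Em in auto)
  also have "\<dots> \<le> (\<integral>\<^sup>+ s. ennreal (f s * gcon J E m s) * indicator {0<..} s \<partial>lborel)"
  proof (rule nn_integral_mono)
    fix s :: real
    have "ennreal (\<Sum>j\<in>J. c j * ?k j * indicator (E j) s) = (\<Sum>j\<in>J. ennreal (c j * ?k j * indicator (E j) s))"
      by (rule sum_ennreal[symmetric]) (auto intro!: mult_nonneg_nonneg divide_nonneg_nonneg m0 c0 less_imp_le[OF mu_pos])
    also have "\<dots> = (\<Sum>j\<in>J. ennreal (c j * ?k j) * indicator (E j) s)"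
      by (intro sum.cong refl) (simp split: split_indicator)
    finally have eq: "(\<Sum>j\<in>J. ennreal (c j * ?k j) * indicator (E j) s) = ennreal (\<Sum>j\<in>J. c j * ?k j * indicator (E j) s)" by simp
    show "(\<Sum>j\<in>J. ennreal (c j * ?k j) * indicator (E j) s) \<le> ennreal (f s * gcon J E m s) * indicator {0<..} s"
    proof (cases "\<exists>j\<in>J. s \<in> E j")
      case True
      then have s0: "0 < s" using Esub by auto
      have "(\<Sum>j\<in>J. c j * ?k j * indicator (E j) s) \<le> (\<Sum>j\<in>J. f s * (?k j * indicator (E j) s))"
      proof (rule sum_mono)
        fix j assume j: "j \<in> J"
        have k0: "0 \<le> ?k j" using m0[OF j] mu_pos[OF j] by simp
        show "c j * ?k j * indicator (E j) s \<le> f s * (?k j * indicator (E j) s)"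
        proof (cases "s \<in> E j")
          case True
          then have "c j * ?k j \<le> f s * ?k j" using Ec[OF j True] k0 by (intro mult_right_mono) auto
          then show ?thesis using True by simp
        qed simp
      qed
      also have "\<dots> = f s * gcon J E m s" unfolding gcon_def by (simp add: sum_distrib_left)
      finally show ?thesis unfolding eq using s0 by (simp add: ennreal_leI)
    next
      case False
      then have "(\<Sum>j\<in>J. ennreal (c j * ?k j) * indicator (E j) s) = 0" by (auto intro: sum.neutral)
      then show ?thesis by simp
    qed
  qed
  also have "\<dots> = pair_int f (gcon J E m)"
    unfolding pair_int_def nn_integral_M0 ..
  finally show ?thesis .
qed

lemma gcon_tail:
  assumes Am[measurable]: "A \<in> sets borel" and P: "\<And>j. j \<in> J \<Longrightarrow> E j \<inter> A \<noteq> {} \<Longrightarrow> P j"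
  shows "(\<integral>\<^sup>+ s. ennreal (gcon J E m s) * indicator A s \<partial>lborel) \<le> ennreal (\<Sum>j\<in>{j\<in>J. P j}. m j)"
proof -
  let ?k = "\<lambda>j. m j / measure lborel (E j)"
  have "(\<integral>\<^sup>+ s. ennreal (gcon J E m s) * indicator A s \<partial>lborel) = (\<integral>\<^sup>+ s. (\<Sum>j\<in>J. ennreal (?k j) * indicator (E j \<inter> A) s) \<partial>lborel)"
  proof (rule nn_integral_cong)
    fix s
    have "ennreal (gcon J E m s) * indicator A s = ennreal (\<Sum>j\<in>J. ?k j * indicator (E j \<inter> A) s)"
      unfolding gcon_def by (auto simp: indicator_def intro!: arg_cong[where f=ennreal] sum.cong)
    also have "\<dots> = (\<Sum>j\<in>J. ennreal (?k j * indicator (E j \<inter> A) s))"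
      by (rule sum_ennreal[symmetric]) (auto intro!: mult_nonneg_nonneg divide_nonneg_nonneg m0 less_imp_le[OF mu_pos])
    also have "\<dots> = (\<Sum>j\<in>J. ennreal (?k j) * indicator (E j \<inter> A) s)"
      by (intro sum.cong refl) (simp split: split_indicator)
    finally show "ennreal (gcon J E m s) * indicator A s = (\<Sum>j\<in>J. ennreal (?k j) * indicator (E j \<inter> A) s)" .
  qed
  also have "\<dots> = (\<Sum>j\<in>J. (\<integral>\<^sup>+ s. ennreal (?k j) * indicator (E j \<inter> A) s \<partial>lborel))"
    by (rule nn_integral_sum) (use Em in auto)
  also have "\<dots> = (\<Sum>j\<in>J. ennreal (?k j) * emeasure lborel (E j \<inter> A))"
    using Em by (intro sum.cong refl nn_integral_cmult_indicator) auto
  also have "\<dots> \<le> (\<Sum>j\<in>J. ennreal (if P j then m j else 0))"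
  proof (rule sum_mono)
    fix j assume j: "j \<in> J"
    show "ennreal (?k j) * emeasure lborel (E j \<inter> A) \<le> ennreal (if P j then m j else 0)"
    proof (cases "E j \<inter> A = {}")
      case True then show ?thesis by simp
    next
      case False
      have "ennreal (?k j) * emeasure lborel (E j \<inter> A) \<le> ennreal (?k j) * emeasure lborel (E j)"
        using j by (intro mult_left_mono emeasure_mono) auto
      also have "\<dots> = ennreal (m j)"
        using emeasure_E[OF j] mu_pos[OF j] m0[OF j] by (simp add: ennreal_mult[symmetric])
      finally show ?thesis using P[OF j False] by simp
    qed
  qed
  also have "\<dots> = ennreal (\<Sum>j\<in>J. if P j then m j else 0)"
    using m0 by (subst sum_ennreal) auto
  also have "(\<Sum>j\<in>J. if P j then m j else 0) = (\<Sum>j\<in>{j\<in>J. P j}. m j)"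
    using J by (simp add: sum.inter_filter)
  finally show ?thesis .
qed

end



lemma SUP_sum_approx:
  fixes X :: "nat \<Rightarrow> ennreal" and u :: "nat \<Rightarrow> nat \<Rightarrow> real" and m :: "nat \<Rightarrow> real"
  assumes u: "\<And>j. incseq (u j)" "\<And>j k. 0 \<le> u j k" "\<And>j. (SUP k. ennreal (u j k)) = X j"
    and bound: "\<And>k. (\<Sum>j\<in>J. ennreal (u j k) * ennreal (m j)) \<le> S"
  shows "(\<Sum>j\<in>J. X j * ennreal (m j)) \<le> S"
proof -
  have "(\<Sum>j\<in>J. X j * ennreal (m j)) = (\<Sum>j\<in>J. SUP k. ennreal (u j k) * ennreal (m j))"
    unfolding u(3)[symmetric] by (intro sum.cong refl SUP_mult_right_ennreal)
  also have "\<dots> = (SUP k. \<Sum>j\<in>J. ennreal (u j k) * ennreal (m j))"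
  proof (rule ennreal_SUP_sum[symmetric])
    fix j assume "j \<in> J"
    show "incseq (\<lambda>k. ennreal (u j k) * ennreal (m j))"
      using u(1)[of j] by (auto simp: incseq_def intro!: mult_right_mono ennreal_leI)
  qed
  also have "\<dots> \<le> S" by (rule SUP_least) (rule bound)
  finally show ?thesis .
qed

lemma choose_approx:
  fixes X :: "nat \<Rightarrow> ennreal"
  obtains u :: "nat \<Rightarrow> nat \<Rightarrow> real" where "\<And>j. incseq (u j)" "\<And>j k. 0 \<le> u j k"
    "\<And>j k. X j = 0 \<or> ennreal (u j k) < X j" "\<And>j. (SUP k. ennreal (u j k)) = X j"
proof -
  have "\<forall>j. \<exists>v::nat \<Rightarrow> real. incseq v \<and> (\<forall>k. 0 \<le> v k) \<and> (\<forall>k. X j = 0 \<or> ennreal (v k) < X j) \<and> (SUP k. ennreal (v k)) = X j"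
    using APPROX by blast
  then obtain u where "\<forall>j. incseq (u j) \<and> (\<forall>k. 0 \<le> u j k) \<and> (\<forall>k. X j = 0 \<or> ennreal (u j k) < X j) \<and> (SUP k. ennreal (u j k)) = X j"
    by metis
  then show ?thesis using that by blast
qed

lemma approx_zero:
  assumes "(SUP k. ennreal (u k)) = (0::ennreal)" "0 \<le> u k"
  shows "u k = 0"
proof -
  have "ennreal (u k) \<le> (SUP k. ennreal (u k))" by (rule SUP_upper) simp
  then show ?thesis using assms by simp
qed

lemma GEN_A:
  fixes f :: "real \<Rightarrow> real" and a :: real and J :: "nat set" and p m :: "nat \<Rightarrow> real"
  assumes a: "0 < a" and fm[measurable]: "f \<in> borel_measurable borel" and f0: "\<And>s. 0 \<le> f s"
    and J: "finite J" and p: "\<And>j. j \<in> J \<Longrightarrow> 0 < p j" and m0: "\<And>j. j \<in> J \<Longrightarrow> 0 \<le> m j"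
    and tail: "\<And>r. 0 < r \<Longrightarrow> (\<Sum>j\<in>{j\<in>J. r < p j}. m j) \<le> r powr (-a)"
  shows "(\<Sum>j\<in>J. FA f (p j) * ennreal (m j)) \<le> Sup {pair_int f g | g. nonneg_meas g \<and> nu_up a g \<le> 1}"
proof -
  obtain u where u: "\<And>j. incseq (u j)" "\<And>j k. 0 \<le> u j k"
    "\<And>j k. FA f (p j) = 0 \<or> ennreal (u j k) < FA f (p j)" "\<And>j. (SUP k. ennreal (u j k)) = FA f (p j)"
    using choose_approx[of "\<lambda>j. FA f (p j)"] by metis
  show ?thesis
  proof (rule SUP_sum_approx[OF u(1,2,4)])
    fix k
    define J' where "J' = {j\<in>J. 0 < FA f (p j)}"
    have J': "finite J'" "J' \<subseteq> J" using J unfolding J'_def by auto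
    define E where "E j = {s\<in>{0<..p j}. ennreal (u j k) < ennreal (f s)}" for j
    define g where "g = gcon J' E m"
    have Em: "E j \<in> sets borel" for j unfolding E_def by measurable
    have Epos: "0 < emeasure lborel (E j)" if "j \<in> J'" for j
    proof -
      have "ennreal (u j k) < FA f (p j)" using u(3)[of j k] that unfolding J'_def by auto
      then show ?thesis unfolding E_def by (rule FA_pos[OF fm])
    qed
    have Efin: "emeasure lborel (E j) < top" for j
    proof -
      have "emeasure lborel (E j) \<le> emeasure lborel {0..\<bar>p j\<bar>}" unfolding E_def by (intro emeasure_mono) auto
      also have "\<dots> = ennreal \<bar>p j\<bar>" by simp
      finally show ?thesis using ennreal_less_top le_less_trans by blast
    qed
    have Esub: "E j \<subseteq> {0<..}" for j unfolding E_def by auto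
    have Ec: "u j k < f s" if "s \<in> E j" for j s using that u(2)[of j k] unfolding E_def by (simp add: ennreal_less_iff)
    have m0': "\<And>j. j \<in> J' \<Longrightarrow> 0 \<le> m j" using m0 J' by auto
    note G = gcon_meas[OF J'(1) Em Epos Efin Esub Ec m0' u(2)] gcon_nonneg[OF J'(1) Em Epos Efin Esub Ec m0' u(2)]
      gcon_pair[OF J'(1) Em Epos Efin Esub Ec m0' u(2)] gcon_tail[OF J'(1) Em Epos Efin Esub Ec m0' u(2)]
    have gm: "g \<in> borel_measurable borel" unfolding g_def by (rule G(1))
    have g0: "0 \<le> g s" for s unfolding g_def by (rule G(2))
    have nu: "nu_up a g \<le> 1"
      unfolding nu_up_def
    proof (rule SUP_least)
      fix r :: real assume "r \<in> {0<..}"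
      then have r: "0 < r" by simp
      have "(\<integral>\<^sup>+ s\<in>{r<..}. ennreal (g s) \<partial>lborel) \<le> ennreal (\<Sum>j\<in>{j\<in>J'. r < p j}. m j)"
        unfolding g_def by (rule G(4)) (auto simp: E_def)
      also have "(\<Sum>j\<in>{j\<in>J'. r < p j}. m j) \<le> (\<Sum>j\<in>{j\<in>J. r < p j}. m j)"
        using J J' m0 by (intro sum_mono2) auto
      also have "\<dots> \<le> r powr (-a)" by (rule tail[OF r])
      finally have "ennreal (r powr a) * (\<integral>\<^sup>+ s\<in>{r<..}. ennreal (g s) \<partial>lborel) \<le> ennreal (r powr a) * ennreal (r powr (-a))"
        by (intro mult_left_mono) (auto simp: ennreal_leI)
      also have "\<dots> = 1" using r by (simp add: ennreal_mult[symmetric] powr_add[symmetric])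
      finally show "ennreal (r powr a) * (\<integral>\<^sup>+ s\<in>{r<..}. ennreal (g s) \<partial>lborel) \<le> 1" .
    qed
    have mem: "pair_int f g \<in> {pair_int f g | g. nonneg_meas g \<and> nu_up a g \<le> 1}"
      using good_nonneg_meas[OF gm g0] nu by (intro CollectI exI[of _ g] conjI refl)
    have "(\<Sum>j\<in>J. ennreal (u j k) * ennreal (m j)) = (\<Sum>j\<in>J'. ennreal (u j k * m j))"
    proof -
      have "(\<Sum>j\<in>J. ennreal (u j k) * ennreal (m j)) = (\<Sum>j\<in>J'. ennreal (u j k) * ennreal (m j))"
      proof (rule sum.mono_neutral_right[OF J(1) J'(2)])
        show "\<forall>j\<in>J - J'. ennreal (u j k) * ennreal (m j) = 0"
        proof
          fix j assume "j \<in> J - J'"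
          then have "FA f (p j) = 0" unfolding J'_def by (auto simp: zero_less_iff_neq_zero)
          then have "u j k = 0" using approx_zero[of "u j" k] u(4)[of j] u(2)[of j k] by simp
          then show "ennreal (u j k) * ennreal (m j) = 0" by simp
        qed
      qed
      also have "\<dots> = (\<Sum>j\<in>J'. ennreal (u j k * m j))"
        using u(2) m0' by (intro sum.cong refl) (simp add: ennreal_mult)
      finally show ?thesis .
    qed
    also have "\<dots> \<le> pair_int f g" unfolding g_def by (rule G(3))
    also have "\<dots> \<le> Sup {pair_int f g | g. nonneg_meas g \<and> nu_up a g \<le> 1}" by (rule Sup_upper[OF mem])
    finally show "(\<Sum>j\<in>J. ennreal (u j k) * ennreal (m j)) \<le> Sup {pair_int f g | g. nonneg_meas g \<and> nu_up a g \<le> 1}" .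
  qed
qed



lemma HB_pos_bounded:
  assumes fm[measurable]: "f \<in> borel_measurable borel" and c: "c < HB f t"
  shows "\<exists>M::nat. 0 < emeasure lborel {s\<in>{t..t + real M}. c < ennreal (f s)}"
proof (rule ccontr)
  assume "\<not> ?thesis"
  then have Z: "emeasure lborel {s\<in>{t..t + real M}. c < ennreal (f s)} = 0" for M
    by (simp add: not_less)
  have "emeasure lborel (\<Union>M. {s\<in>{t..t + real M}. c < ennreal (f s)}) = 0"
    by (rule emeasure_UN_eq_0) (use Z in auto)
  moreover have "(\<Union>M. {s\<in>{t..t + real M}. c < ennreal (f s)}) = {s\<in>{t..}. c < ennreal (f s)}"
  proof (intro equalityI subsetI)
    fix s assume "s \<in> {s\<in>{t..}. c < ennreal (f s)}"
    moreover obtain M :: nat where "s - t < real M" using reals_Archimedean2 by blast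
    ultimately have "s \<in> {s\<in>{t..t + real M}. c < ennreal (f s)}" by auto
    then show "s \<in> (\<Union>M. {s\<in>{t..t + real M}. c < ennreal (f s)})" by blast
  qed auto
  ultimately show False using HB_pos[OF fm c] by simp
qed

lemma GEN_B:
  fixes f :: "real \<Rightarrow> real" and b :: real and J :: "nat set" and p m :: "nat \<Rightarrow> real"
  assumes b: "0 < b" and fm[measurable]: "f \<in> borel_measurable borel" and f0: "\<And>s. 0 \<le> f s"
    and J: "finite J" and p: "\<And>j. j \<in> J \<Longrightarrow> 0 < p j" and m0: "\<And>j. j \<in> J \<Longrightarrow> 0 \<le> m j"
    and tail: "\<And>r. 0 < r \<Longrightarrow> (\<Sum>j\<in>{j\<in>J. p j \<le> r}. m j) \<le> r powr b"
  shows "(\<Sum>j\<in>J. HB f (p j) * ennreal (m j)) \<le> Sup {pair_int f g | g. nonneg_meas g \<and> nu_low b g \<le> 1}"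
proof -
  obtain u where u: "\<And>j. incseq (u j)" "\<And>j k. 0 \<le> u j k"
    "\<And>j k. HB f (p j) = 0 \<or> ennreal (u j k) < HB f (p j)" "\<And>j. (SUP k. ennreal (u j k)) = HB f (p j)"
    using choose_approx[of "\<lambda>j. HB f (p j)"] by metis
  show ?thesis
  proof (rule SUP_sum_approx[OF u(1,2,4)])
    fix k
    define J' where "J' = {j\<in>J. 0 < HB f (p j)}"
    have J': "finite J'" "J' \<subseteq> J" using J unfolding J'_def by auto
    define M where "M j = (SOME M::nat. 0 < emeasure lborel {s\<in>{p j..p j + real M}. ennreal (u j k) < ennreal (f s)})" for j
    define E where "E j = {s\<in>{p j..p j + real (M j)}. ennreal (u j k) < ennreal (f s)}" for j
    define g where "g = gcon J' E m"
    have Em: "E j \<in> sets borel" for j unfolding E_def by measurable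
    have Epos: "0 < emeasure lborel (E j)" if "j \<in> J'" for j
    proof -
      have "ennreal (u j k) < HB f (p j)" using u(3)[of j k] that unfolding J'_def by auto
      from HB_pos_bounded[OF fm this] show ?thesis unfolding E_def M_def by (rule someI_ex)
    qed
    have Efin: "emeasure lborel (E j) < top" for j
    proof -
      have "emeasure lborel (E j) \<le> emeasure lborel {p j..p j + real (M j)}" unfolding E_def by (intro emeasure_mono) auto
      also have "\<dots> = ennreal (real (M j))" by simp
      finally show ?thesis using ennreal_less_top le_less_trans by blast
    qed
    have Esub: "E j \<subseteq> {0<..}" if "j \<in> J'" for j using p[of j] that J' unfolding E_def by auto
    have Ec: "u j k < f s" if "s \<in> E j" for j s using that u(2)[of j k] unfolding E_def by (simp add: ennreal_less_iff)
    have m0': "\<And>j. j \<in> J' \<Longrightarrow> 0 \<le> m j" using m0 J' by auto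
    note G = gcon_meas[OF J'(1) Em Epos Efin Esub Ec m0' u(2)] gcon_nonneg[OF J'(1) Em Epos Efin Esub Ec m0' u(2)]
      gcon_pair[OF J'(1) Em Epos Efin Esub Ec m0' u(2)] gcon_tail[OF J'(1) Em Epos Efin Esub Ec m0' u(2)]
    have gm: "g \<in> borel_measurable borel" unfolding g_def by (rule G(1))
    have g0: "0 \<le> g s" for s unfolding g_def by (rule G(2))
    have nu: "nu_low b g \<le> 1"
      unfolding nu_low_def
    proof (rule SUP_least)
      fix r :: real assume "r \<in> {0<..}"
      then have r: "0 < r" by simp
      have "(\<integral>\<^sup>+ s\<in>{0<..r}. ennreal (g s) \<partial>lborel) \<le> ennreal (\<Sum>j\<in>{j\<in>J'. p j \<le> r}. m j)"
        unfolding g_def by (rule G(4)) (auto simp: E_def)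
      also have "(\<Sum>j\<in>{j\<in>J'. p j \<le> r}. m j) \<le> (\<Sum>j\<in>{j\<in>J. p j \<le> r}. m j)"
        using J J' m0 by (intro sum_mono2) auto
      also have "\<dots> \<le> r powr b" by (rule tail[OF r])
      finally have "ennreal (r powr (-b)) * (\<integral>\<^sup>+ s\<in>{0<..r}. ennreal (g s) \<partial>lborel) \<le> ennreal (r powr (-b)) * ennreal (r powr b)"
        by (intro mult_left_mono) (auto simp: ennreal_leI)
      also have "\<dots> = 1" using r by (simp add: ennreal_mult[symmetric] powr_add[symmetric])
      finally show "ennreal (r powr (-b)) * (\<integral>\<^sup>+ s\<in>{0<..r}. ennreal (g s) \<partial>lborel) \<le> 1" .
    qed
    have mem: "pair_int f g \<in> {pair_int f g | g. nonneg_meas g \<and> nu_low b g \<le> 1}"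
      using good_nonneg_meas[OF gm g0] nu by (intro CollectI exI[of _ g] conjI refl)
    have "(\<Sum>j\<in>J. ennreal (u j k) * ennreal (m j)) = (\<Sum>j\<in>J'. ennreal (u j k * m j))"
    proof -
      have "(\<Sum>j\<in>J. ennreal (u j k) * ennreal (m j)) = (\<Sum>j\<in>J'. ennreal (u j k) * ennreal (m j))"
      proof (rule sum.mono_neutral_right[OF J(1) J'(2)])
        show "\<forall>j\<in>J - J'. ennreal (u j k) * ennreal (m j) = 0"
        proof
          fix j assume "j \<in> J - J'"
          then have "HB f (p j) = 0" unfolding J'_def by (auto simp: zero_less_iff_neq_zero)
          then have "u j k = 0" using approx_zero[of "u j" k] u(4)[of j] u(2)[of j k] by simp
          then show "ennreal (u j k) * ennreal (m j) = 0" by simp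
        qed
      qed
      also have "\<dots> = (\<Sum>j\<in>J'. ennreal (u j k * m j))"
        using u(2) m0' by (intro sum.cong refl) (simp add: ennreal_mult)
      finally show ?thesis .
    qed
    also have "\<dots> \<le> pair_int f g" unfolding g_def by (rule G(3))
    also have "\<dots> \<le> Sup {pair_int f g | g. nonneg_meas g \<and> nu_low b g \<le> 1}" by (rule Sup_upper[OF mem])
    finally show "(\<Sum>j\<in>J. ennreal (u j k) * ennreal (m j)) \<le> Sup {pair_int f g | g. nonneg_meas g \<and> nu_low b g \<le> 1}" .
  qed
qed



definition dA :: "nat \<Rightarrow> real \<Rightarrow> real" where "dA n t = real_of_int \<lfloor>t * 2^n\<rfloor> / 2^n"

lemma dA_meas[measurable]: "dA n \<in> borel_measurable borel"
  unfolding dA_def by measurable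

lemma dA_le: "dA n t \<le> t"
proof -
  have "real_of_int \<lfloor>t * 2^n\<rfloor> \<le> t * 2^n" by simp
  then show ?thesis unfolding dA_def by (simp add: divide_le_eq)
qed

lemma dA_mono: "dA n t \<le> dA (Suc n) t"
proof -
  have "2 * \<lfloor>t * 2^n\<rfloor> \<le> \<lfloor>t * 2^Suc n\<rfloor>"
  proof -
    have "real_of_int (2 * \<lfloor>t * 2^n\<rfloor>) \<le> t * 2^Suc n" by simp
    then show ?thesis by (simp add: le_floor_iff)
  qed
  then have "real_of_int (2 * \<lfloor>t * 2^n\<rfloor>) \<le> real_of_int \<lfloor>t * 2^Suc n\<rfloor>" by linarith
  then have "2 * real_of_int \<lfloor>t * 2^n\<rfloor> / 2^Suc n \<le> real_of_int \<lfloor>t * 2^Suc n\<rfloor> / 2^Suc n"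
    by (intro divide_right_mono) auto
  then show ?thesis unfolding dA_def by simp
qed

lemma dA_approx:
  assumes "0 < q" "q < t"
  shows "\<exists>n. t < real n \<and> q \<le> dA n t"
proof -
  obtain n :: nat where n: "max t (1 / (t - q)) < real n" using reals_Archimedean2 by blast
  have "real n < 2^n" using less_exp[of n] by (metis of_nat_less_iff of_nat_numeral of_nat_power)
  moreover have "1 / (t - q) < real n" using n by simp
  ultimately have "1 / (t - q) < 2^n" by linarith
  then have A: "1 / 2^n < t - q" using assms by (simp add: field_simps)
  have "t * 2^n - 1 < real_of_int \<lfloor>t * 2^n\<rfloor>" by linarith
  then have B: "(t * 2^n - 1) / 2^n < real_of_int \<lfloor>t * 2^n\<rfloor> / 2^n"
    by (intro divide_strict_right_mono) simp_all
  have C: "(t * 2^n - 1) / 2^n = t - 1 / (2::real)^n" by (simp add: field_simps)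
  have "q \<le> dA n t" using A B C unfolding dA_def by simp
  then show ?thesis using n by auto
qed

lemma floor_interval:
  fixes t :: real and j :: nat
  shows "t \<in> {real j / 2^n ..< real (Suc j) / 2^n} \<longleftrightarrow> \<lfloor>t * 2^n\<rfloor> = int j"
proof -
  have "t \<in> {real j / 2^n ..< real (Suc j) / 2^n} \<longleftrightarrow> real j \<le> t * 2^n \<and> t * 2^n < real j + 1"
    by (auto simp: field_simps)
  also have "\<dots> \<longleftrightarrow> \<lfloor>t * 2^n\<rfloor> = int j" by (simp add: floor_eq_iff)
  finally show ?thesis .
qed



lemma telescope_bound:
  fixes h :: "nat \<Rightarrow> real"
  assumes "\<And>j. k \<le> j \<Longrightarrow> h (Suc j) \<le> h j" "\<And>j. 0 \<le> h j"
  shows "(\<Sum>j\<in>{k..<N}. h j - h (Suc j)) \<le> h k"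
proof (cases "k \<le> N")
  case True
  have "(\<Sum>j\<in>{k..<N}. h j - h (Suc j)) = - (\<Sum>j\<in>{k..<N}. h (Suc j) - h j)"
    by (simp add: sum_negf[symmetric])
  also have "\<dots> = h k - h N" using sum_Suc_diff'[OF True, of h] by simp
  finally show ?thesis using assms(2)[of N] by simp
next
  case False
  then have "{k..<N} = {}" by auto
  moreover have "0 \<le> h k" using assms(2) by simp
  ultimately show ?thesis by simp
qed

context
  fixes f :: "real \<Rightarrow> real" and a :: real
  assumes a: "0 < a" and fm[measurable]: "f \<in> borel_measurable borel" and f0: "\<And>s. 0 \<le> f s"
begin

definition FnA :: "nat \<Rightarrow> real \<Rightarrow> ennreal" where
  "FnA n t = (if t < real n then FA f (dA n t) else 0)"

lemma FnA_meas[measurable]: "FnA n \<in> borel_measurable borel"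
  unfolding FnA_def by measurable

lemma FnA_inc: "FnA n t \<le> FnA (Suc n) t"
  unfolding FnA_def using FA_mono[OF fm dA_mono[of n t]] by auto

lemma FnA_SUP:
  assumes t: "0 < t"
  shows "(SUP n. FnA n t) = FA f t"
proof (rule antisym)
  show "(SUP n. FnA n t) \<le> FA f t"
    by (rule SUP_least) (auto simp: FnA_def intro: FA_mono[OF fm dA_le])
  show "FA f t \<le> (SUP n. FnA n t)"
  proof (rule FA_C3[OF fm])
    fix q assume "0 < q" "q < t"
    then obtain n where n: "t < real n" "q \<le> dA n t" using dA_approx by blast
    then have "FA f q \<le> FnA n t" unfolding FnA_def using FA_mono[OF fm n(2)] by simp
    also have "\<dots> \<le> (SUP n. FnA n t)" by (rule SUP_upper) simp
    finally show "FA f q \<le> (SUP n. FnA n t)" .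
  qed
qed

lemma step_A:
  "FnA n t * (ennreal (wA a t) * indicator {0<..} t) =
   (\<Sum>j\<in>{1..<n*2^n}. FA f (real j / 2^n) * (ennreal (wA a t) * indicator {real j / 2^n ..< real (Suc j) / 2^n} t))"
proof -
  define z where "z = \<lfloor>t * 2^n\<rfloor>"
  have S0: "(\<Sum>j\<in>{1..<n*2^n}. FA f (real j / 2^n) * (ennreal (wA a t) * indicator {real j / 2^n ..< real (Suc j) / 2^n} t))
      = (\<Sum>j\<in>{1..<n*2^n}. if int j = z then FA f (real j / 2^n) * ennreal (wA a t) else 0)"
  proof (intro sum.cong refl)
    fix j assume "j \<in> {1..<n*2^n}"
    have "indicator {real j / 2^n ..< real (Suc j) / 2^n} t = (if int j = z then 1 else (0::ennreal))"
      by (simp only: indicator_def floor_interval z_def) auto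
    then show "FA f (real j / 2^n) * (ennreal (wA a t) * indicator {real j / 2^n ..< real (Suc j) / 2^n} t)
      = (if int j = z then FA f (real j / 2^n) * ennreal (wA a t) else 0)" by simp
  qed
  show ?thesis
  proof (cases "0 < t")
    case False
    then have "t * 2^n \<le> 0" by (simp add: mult_nonpos_nonneg)
    then have "z \<le> 0" unfolding z_def by (simp add: floor_le_iff)
    then have "(\<Sum>j\<in>{1..<n*2^n}. if int j = z then FA f (real j / 2^n) * ennreal (wA a t) else 0) = 0"
      by (intro sum.neutral) auto
    then show ?thesis using False S0 by simp
  next
    case True
    then have z0: "0 \<le> z" unfolding z_def by simp
    define j0 where "j0 = nat z"
    have "(\<Sum>j\<in>{1..<n*2^n}. if int j = z then FA f (real j / 2^n) * ennreal (wA a t) else 0)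
        = (\<Sum>j\<in>{1..<n*2^n}. if j0 = j then FA f (real j / 2^n) * ennreal (wA a t) else 0)"
      using z0 unfolding j0_def by (intro sum.cong refl) auto
    also have "\<dots> = (if j0 \<in> {1..<n*2^n} then FA f (real j0 / 2^n) * ennreal (wA a t) else 0)"
      by (rule sum.delta') simp
    finally have R: "(\<Sum>j\<in>{1..<n*2^n}. if int j = z then FA f (real j / 2^n) * ennreal (wA a t) else 0)
        = (if j0 \<in> {1..<n*2^n} then FA f (real j0 / 2^n) * ennreal (wA a t) else 0)" .
    have dz: "dA n t = real j0 / 2^n" unfolding dA_def j0_def z_def[symmetric] using z0 by simp
    show ?thesis
    proof (cases "t < real n")
      case tn: True
      have "t * 2^n < real n * 2^n" using tn by simp
      then have "z < int (n * 2^n)" unfolding z_def by (simp add: floor_less_iff)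
      then have j0N: "j0 < n * 2^n" unfolding j0_def using z0 by (simp add: nat_less_iff)
      show ?thesis
      proof (cases "j0 = 0")
        case True
        then have "FA f (dA n t) = 0" using dz FA_nonpos[OF fm] by simp
        then show ?thesis using R True tn S0 by (simp add: FnA_def)
      next
        case False
        then show ?thesis using R j0N tn dz True S0 by (simp add: FnA_def)
      qed
    next
      case tn: False
      have "real n * 2^n \<le> t * 2^n" using tn by simp
      then have "int (n * 2^n) \<le> z" unfolding z_def by (simp add: le_floor_iff)
      then have "\<not> j0 < n * 2^n" unfolding j0_def using z0 by (simp add: nat_less_iff)
      then show ?thesis using R tn S0 by (simp add: FnA_def)
    qed
  qed
qed

end



lemma tail_A:
  assumes a: "0 < a" and r: "0 < r"
  shows "(\<Sum>j\<in>{j\<in>{1..<N}. r < real j / 2^n}. (real j / 2^n) powr (-a) - (real (Suc j) / 2^n) powr (-a)) \<le> r powr (-a)"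
proof -
  define h where "h j = (real j / 2^n) powr (-a)" for j
  define k where "k = nat \<lfloor>r * 2^n\<rfloor> + 1"
  have hdec: "h (Suc j) \<le> h j" if "1 \<le> j" for j
    unfolding h_def using a that by (intro powr_mono2') (auto simp: divide_right_mono)
  have h0: "0 \<le> h j" for j unfolding h_def by simp
  have k1: "1 \<le> k" unfolding k_def by simp
  have sub: "{j\<in>{1..<N}. r < real j / 2^n} \<subseteq> {k..<N}"
  proof
    fix j assume "j \<in> {j\<in>{1..<N}. r < real j / 2^n}"
    then have j: "j < N" "r * 2^n < real j" by (auto simp: field_simps)
    then have "\<lfloor>r * 2^n\<rfloor> < int j" by (simp add: floor_less_iff)
    moreover have "0 \<le> \<lfloor>r * 2^n\<rfloor>" using r by simp
    ultimately have "nat \<lfloor>r * 2^n\<rfloor> < j" by (simp add: nat_less_iff)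
    then have "k \<le> j" unfolding k_def by simp
    then show "j \<in> {k..<N}" using j by simp
  qed
  have "(\<Sum>j\<in>{j\<in>{1..<N}. r < real j / 2^n}. h j - h (Suc j)) \<le> (\<Sum>j\<in>{k..<N}. h j - h (Suc j))"
    using sub k1 hdec by (intro sum_mono2) auto
  also have "\<dots> \<le> h k" using hdec k1 h0 by (intro telescope_bound) auto
  also have "h k \<le> r powr (-a)"
  proof -
    have "0 \<le> \<lfloor>r * 2^n\<rfloor>" using r by simp
    then have "real k = real_of_int \<lfloor>r * 2^n\<rfloor> + 1" unfolding k_def by simp
    then have "r * 2^n \<le> real k" by linarith
    then have "r \<le> real k / 2^n" by (simp add: field_simps)
    then show ?thesis unfolding h_def using a r by (intro powr_mono2') auto
  qed
  finally show ?thesis unfolding h_def .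
qed

lemma LB_A:
  fixes f :: "real \<Rightarrow> real" and a :: real
  assumes a: "0 < a" and fm[measurable]: "f \<in> borel_measurable borel" and f0: "\<And>s. 0 \<le> f s"
  shows "ennreal a * mu_low a f \<le> Sup {pair_int f g | g. nonneg_meas g \<and> nu_up a g \<le> 1}"
proof -
  let ?W = "\<lambda>t. ennreal (wA a t) * indicator {0<..} t"
  let ?S = "Sup {pair_int f g | g. nonneg_meas g \<and> nu_up a g \<le> 1}"
  have "ennreal a * mu_low a f = (\<integral>\<^sup>+ t. FA f t * ?W t \<partial>lborel)"
    by (rule mu_low_lborel[OF a fm])
  also have "\<dots> = (\<integral>\<^sup>+ t. (SUP n. FnA f n t * ?W t) \<partial>lborel)"
  proof (rule nn_integral_cong)
    fix t :: real
    show "FA f t * ?W t = (SUP n. FnA f n t * ?W t)"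
    proof (cases "0 < t")
      case True
      have "FA f t * ?W t = (SUP n. FnA f n t) * ?W t" using FnA_SUP[OF a fm f0 True] by simp
      also have "\<dots> = (SUP n. FnA f n t * ?W t)" by (rule SUP_mult_right_ennreal)
      finally show ?thesis .
    qed simp
  qed
  also have "\<dots> = (SUP n. (\<integral>\<^sup>+ t. FnA f n t * ?W t \<partial>lborel))"
  proof (rule nn_integral_monotone_convergence_SUP)
    show "incseq (\<lambda>n t. FnA f n t * ?W t)"
      by (rule incseq_SucI) (auto simp: le_fun_def intro!: mult_right_mono FnA_inc[OF a fm f0])
    show "\<And>n. (\<lambda>t. FnA f n t * ?W t) \<in> borel_measurable lborel"
      using FnA_meas[OF a fm f0] by measurable
  qed
  also have "\<dots> \<le> ?S"
  proof (rule SUP_least)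
    fix n :: nat
    define p where "p j = real j / 2^n" for j
    define m where "m j = p j powr (-a) - p (Suc j) powr (-a)" for j
    have p: "0 < p j" if "j \<in> {1..<n*2^n}" for j using that unfolding p_def by simp
    have pp: "p j \<le> p (Suc j)" for j unfolding p_def by (simp add: divide_right_mono)
    have m0: "0 \<le> m j" if "j \<in> {1..<n*2^n}" for j
      unfolding m_def using p[OF that] pp[of j] a by (auto intro!: powr_mono2')
    have "(\<integral>\<^sup>+ t. FnA f n t * ?W t \<partial>lborel)
        = (\<integral>\<^sup>+ t. (\<Sum>j\<in>{1..<n*2^n}. FA f (p j) * (ennreal (wA a t) * indicator {p j ..< p (Suc j)} t)) \<partial>lborel)"
      unfolding p_def by (intro nn_integral_cong) (rule step_A[OF a fm f0])
    also have "\<dots> = (\<Sum>j\<in>{1..<n*2^n}. (\<integral>\<^sup>+ t. FA f (p j) * (ennreal (wA a t) * indicator {p j ..< p (Suc j)} t) \<partial>lborel))"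
      by (rule nn_integral_sum) measurable
    also have "\<dots> = (\<Sum>j\<in>{1..<n*2^n}. FA f (p j) * ennreal (m j))"
    proof (rule sum.cong[OF refl])
      fix j assume j: "j \<in> {1..<n*2^n}"
      have "(\<integral>\<^sup>+ t. FA f (p j) * (ennreal (wA a t) * indicator {p j ..< p (Suc j)} t) \<partial>lborel)
          = FA f (p j) * (\<integral>\<^sup>+ t. ennreal (wA a t) * indicator {p j ..< p (Suc j)} t \<partial>lborel)"
        by (rule nn_integral_cmult) measurable
      also have "\<dots> = FA f (p j) * ennreal (m j)"
        unfolding m_def using IA2[OF a p[OF j] pp[of j]] by simp
      finally show "(\<integral>\<^sup>+ t. FA f (p j) * (ennreal (wA a t) * indicator {p j ..< p (Suc j)} t) \<partial>lborel) = FA f (p j) * ennreal (m j)" .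
    qed
    also have "\<dots> \<le> ?S"
    proof (rule GEN_A[OF a fm f0])
      show "finite {1..<n*2^n}" by simp
      show "\<And>j. j \<in> {1..<n*2^n} \<Longrightarrow> 0 < p j" by (rule p)
      show "\<And>j. j \<in> {1..<n*2^n} \<Longrightarrow> 0 \<le> m j" by (rule m0)
      show "(\<Sum>j\<in>{j\<in>{1..<n*2^n}. r < p j}. m j) \<le> r powr (-a)" if "0 < r" for r
        unfolding m_def p_def using tail_A[OF a that] by simp
    qed
    finally show "(\<integral>\<^sup>+ t. FnA f n t * ?W t \<partial>lborel) \<le> ?S" .
  qed
  finally show ?thesis .
qed



definition dB :: "nat \<Rightarrow> real \<Rightarrow> real" where "dB n t = real_of_int \<lceil>t * 2^n\<rceil> / 2^n"

lemma dB_meas[measurable]: "dB n \<in> borel_measurable borel"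
  unfolding dB_def by measurable

lemma dB_ge: "t \<le> dB n t"
proof -
  have "t * 2^n \<le> real_of_int \<lceil>t * 2^n\<rceil>" by simp
  then show ?thesis unfolding dB_def by (simp add: le_divide_eq)
qed

lemma dB_mono: "dB (Suc n) t \<le> dB n t"
proof -
  have "\<lceil>t * 2^Suc n\<rceil> \<le> 2 * \<lceil>t * 2^n\<rceil>"
  proof -
    have "t * 2^Suc n \<le> real_of_int (2 * \<lceil>t * 2^n\<rceil>)" by simp
    then show ?thesis by (simp add: ceiling_le_iff)
  qed
  then have "real_of_int \<lceil>t * 2^Suc n\<rceil> \<le> real_of_int (2 * \<lceil>t * 2^n\<rceil>)" by linarith
  then have "real_of_int \<lceil>t * 2^Suc n\<rceil> / 2^Suc n \<le> 2 * real_of_int \<lceil>t * 2^n\<rceil> / 2^Suc n"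
    by (intro divide_right_mono) auto
  then show ?thesis unfolding dB_def by simp
qed

lemma dB_approx:
  assumes "t < q"
  shows "\<exists>n. t \<le> real n \<and> dB n t \<le> q"
proof -
  obtain n :: nat where n: "max t (1 / (q - t)) < real n" using reals_Archimedean2 by blast
  have "real n < 2^n" using less_exp[of n] by (metis of_nat_less_iff of_nat_numeral of_nat_power)
  moreover have "1 / (q - t) < real n" using n by simp
  ultimately have "1 / (q - t) < 2^n" by linarith
  then have A: "1 / 2^n < q - t" using assms by (simp add: field_simps)
  have "real_of_int \<lceil>t * 2^n\<rceil> < t * 2^n + 1" by linarith
  then have B: "real_of_int \<lceil>t * 2^n\<rceil> / 2^n < (t * 2^n + 1) / 2^n"
    by (intro divide_strict_right_mono) simp_all
  have C: "(t * 2^n + 1) / 2^n = t + 1 / (2::real)^n" by (simp add: field_simps)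
  have "dB n t \<le> q" using A B C unfolding dB_def by simp
  moreover have "t \<le> real n" using n by simp
  ultimately show ?thesis by blast
qed

lemma ceiling_interval:
  fixes t :: real and j :: nat
  shows "t \<in> {real j / 2^n <.. real (Suc j) / 2^n} \<longleftrightarrow> \<lceil>t * 2^n\<rceil> = int j + 1"
proof -
  have "t \<in> {real j / 2^n <.. real (Suc j) / 2^n} \<longleftrightarrow> real j < t * 2^n \<and> t * 2^n \<le> real j + 1"
    by (auto simp: field_simps)
  also have "\<dots> \<longleftrightarrow> \<lceil>t * 2^n\<rceil> = int j + 1" by (simp add: ceiling_eq_iff)
  finally show ?thesis .
qed

context
  fixes f :: "real \<Rightarrow> real" and b :: real
  assumes b: "0 < b" and fm[measurable]: "f \<in> borel_measurable borel" and f0: "\<And>s. 0 \<le> f s"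
begin

definition FnB :: "nat \<Rightarrow> real \<Rightarrow> ennreal" where
  "FnB n t = (if t \<le> real n then HB f (dB n t) else 0)"

lemma FnB_meas[measurable]: "FnB n \<in> borel_measurable borel"
  unfolding FnB_def by measurable

lemma FnB_inc: "FnB n t \<le> FnB (Suc n) t"
  unfolding FnB_def using HB_antimono[OF fm dB_mono[of n t]] by auto

lemma FnB_SUP:
  assumes t: "0 < t"
  shows "(SUP n. FnB n t) = HB f t"
proof (rule antisym)
  show "(SUP n. FnB n t) \<le> HB f t"
    by (rule SUP_least) (auto simp: FnB_def intro: HB_antimono[OF fm dB_ge])
  show "HB f t \<le> (SUP n. FnB n t)"
  proof (rule HB_C3[OF fm])
    fix q assume "t < q"
    then obtain n where n: "t \<le> real n" "dB n t \<le> q" using dB_approx by blast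
    then have "HB f q \<le> FnB n t" unfolding FnB_def using HB_antimono[OF fm n(2)] by simp
    also have "\<dots> \<le> (SUP n. FnB n t)" by (rule SUP_upper) simp
    finally show "HB f q \<le> (SUP n. FnB n t)" .
  qed
qed

lemma step_B:
  "FnB n t * (ennreal (wB b t) * indicator {0<..} t) =
   (\<Sum>j\<in>{0..<n*2^n}. HB f (real (Suc j) / 2^n) * (ennreal (wB b t) * indicator {real j / 2^n <.. real (Suc j) / 2^n} t))"
proof -
  define z where "z = \<lceil>t * 2^n\<rceil>"
  have S0: "(\<Sum>j\<in>{0..<n*2^n}. HB f (real (Suc j) / 2^n) * (ennreal (wB b t) * indicator {real j / 2^n <.. real (Suc j) / 2^n} t))
      = (\<Sum>j\<in>{0..<n*2^n}. if int j + 1 = z then HB f (real (Suc j) / 2^n) * ennreal (wB b t) else 0)"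
  proof (intro sum.cong refl)
    fix j assume "j \<in> {0..<n*2^n}"
    have "indicator {real j / 2^n <.. real (Suc j) / 2^n} t = (if int j + 1 = z then 1 else (0::ennreal))"
      by (simp only: indicator_def ceiling_interval z_def) auto
    then show "HB f (real (Suc j) / 2^n) * (ennreal (wB b t) * indicator {real j / 2^n <.. real (Suc j) / 2^n} t)
      = (if int j + 1 = z then HB f (real (Suc j) / 2^n) * ennreal (wB b t) else 0)" by simp
  qed
  show ?thesis
  proof (cases "0 < t")
    case False
    then have "t * 2^n \<le> 0" by (simp add: mult_nonpos_nonneg)
    then have "z \<le> 0" unfolding z_def by (simp add: ceiling_le_iff)
    then have "(\<Sum>j\<in>{0..<n*2^n}. if int j + 1 = z then HB f (real (Suc j) / 2^n) * ennreal (wB b t) else 0) = 0"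
      by (intro sum.neutral) auto
    then show ?thesis using False S0 by simp
  next
    case True
    then have z1: "1 \<le> z" unfolding z_def by (simp add: zero_less_mult_iff)
    define j0 where "j0 = nat (z - 1)"
    have "(\<Sum>j\<in>{0..<n*2^n}. if int j + 1 = z then HB f (real (Suc j) / 2^n) * ennreal (wB b t) else 0)
        = (\<Sum>j\<in>{0..<n*2^n}. if j0 = j then HB f (real (Suc j) / 2^n) * ennreal (wB b t) else 0)"
      using z1 unfolding j0_def by (intro sum.cong refl) auto
    also have "\<dots> = (if j0 \<in> {0..<n*2^n} then HB f (real (Suc j0) / 2^n) * ennreal (wB b t) else 0)"
      by (rule sum.delta') simp
    finally have R: "(\<Sum>j\<in>{0..<n*2^n}. if int j + 1 = z then HB f (real (Suc j) / 2^n) * ennreal (wB b t) else 0)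
        = (if j0 \<in> {0..<n*2^n} then HB f (real (Suc j0) / 2^n) * ennreal (wB b t) else 0)" .
    have dz: "dB n t = real (Suc j0) / 2^n" unfolding dB_def j0_def z_def[symmetric] using z1 by simp
    show ?thesis
    proof (cases "t \<le> real n")
      case tn: True
      have "t * 2^n \<le> real n * 2^n" using tn by simp
      then have "z \<le> int (n * 2^n)" unfolding z_def by (simp add: ceiling_le_iff)
      then have j0N: "j0 < n * 2^n" unfolding j0_def using z1 by (simp add: nat_less_iff)
      then show ?thesis using R tn dz True S0 by (simp add: FnB_def)
    next
      case tn: False
      have "real n * 2^n < t * 2^n" using tn by simp
      then have "int (n * 2^n) < z" unfolding z_def by (simp add: less_ceiling_iff)
      then have "\<not> j0 < n * 2^n" unfolding j0_def using z1 by (simp add: nat_less_iff)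
      then show ?thesis using R tn S0 by (simp add: FnB_def)
    qed
  qed
qed

end



lemma tail_B:
  assumes b: "0 < b" and r: "0 < r"
  shows "(\<Sum>j\<in>{j\<in>{0..<N}. real (Suc j) / 2^n \<le> r}. (real (Suc j) / 2^n) powr b - (real j / 2^n) powr b) \<le> r powr b"
proof -
  define h where "h j = (real j / 2^n) powr b" for j
  define k where "k = nat \<lfloor>r * 2^n\<rfloor>"
  have hinc: "h j \<le> h (Suc j)" for j
    unfolding h_def using b by (intro powr_mono2) (auto simp: divide_right_mono)
  have sub: "{j\<in>{0..<N}. real (Suc j) / 2^n \<le> r} \<subseteq> {0..<k}"
  proof
    fix j assume "j \<in> {j\<in>{0..<N}. real (Suc j) / 2^n \<le> r}"
    then have "real (Suc j) \<le> r * 2^n" by (auto simp: field_simps)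
    then have "int (Suc j) \<le> \<lfloor>r * 2^n\<rfloor>" by (simp add: le_floor_iff)
    then have "Suc j \<le> k" unfolding k_def by linarith
    then show "j \<in> {0..<k}" by simp
  qed
  have "(\<Sum>j\<in>{j\<in>{0..<N}. real (Suc j) / 2^n \<le> r}. h (Suc j) - h j) \<le> (\<Sum>j\<in>{0..<k}. h (Suc j) - h j)"
    using sub hinc by (intro sum_mono2) auto
  also have "\<dots> = h k - h 0" by (rule sum_Suc_diff') simp
  also have "\<dots> = h k" using b by (simp add: h_def)
  also have "h k \<le> r powr b"
  proof -
    have "0 \<le> \<lfloor>r * 2^n\<rfloor>" using r by simp
    then have "real k = real_of_int \<lfloor>r * 2^n\<rfloor>" unfolding k_def by simp
    then have "real k \<le> r * 2^n" by linarith
    then have "real k / 2^n \<le> r" by (simp add: field_simps)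
    then show ?thesis unfolding h_def using b by (intro powr_mono2) auto
  qed
  finally show ?thesis unfolding h_def .
qed

lemma LB_B:
  fixes f :: "real \<Rightarrow> real" and b :: real
  assumes b: "0 < b" and fm[measurable]: "f \<in> borel_measurable borel" and f0: "\<And>s. 0 \<le> f s"
  shows "ennreal b * mu_up b f \<le> Sup {pair_int f g | g. nonneg_meas g \<and> nu_low b g \<le> 1}"
proof -
  let ?W = "\<lambda>t. ennreal (wB b t) * indicator {0<..} t"
  let ?S = "Sup {pair_int f g | g. nonneg_meas g \<and> nu_low b g \<le> 1}"
  have "ennreal b * mu_up b f = (\<integral>\<^sup>+ t. HB f t * ?W t \<partial>lborel)"
    by (rule mu_up_lborel[OF b fm])
  also have "\<dots> = (\<integral>\<^sup>+ t. (SUP n. FnB f n t * ?W t) \<partial>lborel)"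
  proof (rule nn_integral_cong)
    fix t :: real
    show "HB f t * ?W t = (SUP n. FnB f n t * ?W t)"
    proof (cases "0 < t")
      case True
      have "HB f t * ?W t = (SUP n. FnB f n t) * ?W t" using FnB_SUP[OF b fm f0 True] by simp
      also have "\<dots> = (SUP n. FnB f n t * ?W t)" by (rule SUP_mult_right_ennreal)
      finally show ?thesis .
    qed simp
  qed
  also have "\<dots> = (SUP n. (\<integral>\<^sup>+ t. FnB f n t * ?W t \<partial>lborel))"
  proof (rule nn_integral_monotone_convergence_SUP)
    show "incseq (\<lambda>n t. FnB f n t * ?W t)"
      by (rule incseq_SucI) (auto simp: le_fun_def intro!: mult_right_mono FnB_inc[OF b fm f0])
    show "\<And>n. (\<lambda>t. FnB f n t * ?W t) \<in> borel_measurable lborel"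
      using FnB_meas[OF b fm f0] by measurable
  qed
  also have "\<dots> \<le> ?S"
  proof (rule SUP_least)
    fix n :: nat
    define p where "p j = real (Suc j) / 2^n" for j
    define c where "c j = real j / 2^n" for j
    define m where "m j = p j powr b - c j powr b" for j
    have p: "0 < p j" for j unfolding p_def by simp
    have c0: "0 \<le> c j" for j unfolding c_def by simp
    have cp: "c j \<le> p j" for j unfolding p_def c_def by (simp add: divide_right_mono)
    have m0: "0 \<le> m j" for j
      unfolding m_def using c0[of j] cp[of j] b by (auto intro!: powr_mono2)
    have "(\<integral>\<^sup>+ t. FnB f n t * ?W t \<partial>lborel)
        = (\<integral>\<^sup>+ t. (\<Sum>j\<in>{0..<n*2^n}. HB f (p j) * (ennreal (wB b t) * indicator {c j <.. p j} t)) \<partial>lborel)"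
      unfolding p_def c_def by (intro nn_integral_cong) (rule step_B[OF b fm f0])
    also have "\<dots> = (\<Sum>j\<in>{0..<n*2^n}. (\<integral>\<^sup>+ t. HB f (p j) * (ennreal (wB b t) * indicator {c j <.. p j} t) \<partial>lborel))"
      by (rule nn_integral_sum) measurable
    also have "\<dots> = (\<Sum>j\<in>{0..<n*2^n}. HB f (p j) * ennreal (m j))"
    proof (rule sum.cong[OF refl])
      fix j assume j: "j \<in> {0..<n*2^n}"
      have "(\<integral>\<^sup>+ t. HB f (p j) * (ennreal (wB b t) * indicator {c j <.. p j} t) \<partial>lborel)
          = HB f (p j) * (\<integral>\<^sup>+ t. ennreal (wB b t) * indicator {c j <.. p j} t \<partial>lborel)"
        by (rule nn_integral_cmult) measurable
      also have "\<dots> = HB f (p j) * ennreal (m j)"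
        unfolding m_def using IB2[OF b c0[of j] cp[of j]] by simp
      finally show "(\<integral>\<^sup>+ t. HB f (p j) * (ennreal (wB b t) * indicator {c j <.. p j} t) \<partial>lborel) = HB f (p j) * ennreal (m j)" .
    qed
    also have "\<dots> \<le> ?S"
    proof (rule GEN_B[OF b fm f0])
      show "finite {0..<n*2^n}" by simp
      show "\<And>j. j \<in> {0..<n*2^n} \<Longrightarrow> 0 < p j" by (rule p)
      show "\<And>j. j \<in> {0..<n*2^n} \<Longrightarrow> 0 \<le> m j" by (rule m0)
      show "(\<Sum>j\<in>{j\<in>{0..<n*2^n}. p j \<le> r}. m j) \<le> r powr b" if "0 < r" for r
        unfolding m_def p_def c_def using tail_B[OF b that] by simp
    qed
    finally show "(\<integral>\<^sup>+ t. FnB f n t * ?W t \<partial>lborel) \<le> ?S" .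
  qed
  finally show ?thesis .
qed



lemma zr_zr: "zr (zr f) = zr f"
  unfolding zr_def by auto

lemma pair_int_zr1: "pair_int (zr f) g = pair_int f g"
  using pair_int_zr[of "zr f" g] pair_int_zr[of f g] by (simp add: zr_zr)

lemma pair_int_zr2: "pair_int f (zr g) = pair_int f g"
  using pair_int_zr[of f "zr g"] pair_int_zr[of f g] by (simp add: zr_zr)

lemma UA_gen:
  assumes a: "0 < a" and f: "nonneg_meas f" and g: "nonneg_meas g"
  shows "pair_int f g \<le> ennreal a * nu_up a g * mu_low a f"
proof -
  have "pair_int f g = pair_int (zr f) (zr g)" by (rule pair_int_zr)
  also have "\<dots> \<le> ennreal a * nu_up a (zr g) * mu_low a (zr f)"
    using zr_meas[OF f] zr_meas[OF g] by (intro UA[OF a]) auto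
  finally show ?thesis by (simp add: nu_up_zr[symmetric] mu_low_zr[symmetric])
qed

lemma UB_gen:
  assumes b: "0 < b" and f: "nonneg_meas f" and g: "nonneg_meas g"
  shows "pair_int f g \<le> ennreal b * nu_low b g * mu_up b f"
proof -
  have "pair_int f g = pair_int (zr f) (zr g)" by (rule pair_int_zr)
  also have "\<dots> \<le> ennreal b * nu_low b (zr g) * mu_up b (zr f)"
    using zr_meas[OF f] zr_meas[OF g] by (intro UB[OF b]) auto
  finally show ?thesis by (simp add: nu_low_zr[symmetric] mu_up_zr[symmetric])
qed

theorem theorem3p1:
  fixes \<alpha> \<beta> :: real
  assumes "\<alpha> > 0" and "\<beta> > 0"
  shows "(\<forall>f. nonneg_meas f \<longrightarrow>
            Sup {pair_int f g | g. nonneg_meas g \<and> nu_up \<alpha> g \<le> 1} = ennreal \<alpha> * mu_low \<alpha> f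
          \<and> Sup {pair_int f g | g. nonneg_meas g \<and> nu_low \<beta> g \<le> 1} = ennreal \<beta> * mu_up \<beta> f)
       \<and> (\<forall>g. nonneg_meas g \<longrightarrow>
            Sup {pair_int f g | f. nonneg_meas f \<and> mu_low \<alpha> f \<le> 1} = ennreal \<alpha> * nu_up \<alpha> g
          \<and> Sup {pair_int f g | f. nonneg_meas f \<and> mu_up \<beta> f \<le> 1} = ennreal \<beta> * nu_low \<beta> g)"
proof (intro conjI allI impI)
  fix f assume f: "nonneg_meas f"
  note fz = zr_meas[OF f]
  show "Sup {pair_int f g | g. nonneg_meas g \<and> nu_up \<alpha> g \<le> 1} = ennreal \<alpha> * mu_low \<alpha> f"
  proof (rule antisym)
    show "Sup {pair_int f g | g. nonneg_meas g \<and> nu_up \<alpha> g \<le> 1} \<le> ennreal \<alpha> * mu_low \<alpha> f"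
    proof (rule Sup_least)
      fix x assume "x \<in> {pair_int f g | g. nonneg_meas g \<and> nu_up \<alpha> g \<le> 1}"
      then obtain g where g: "x = pair_int f g" "nonneg_meas g" "nu_up \<alpha> g \<le> 1" by blast
      have "x \<le> ennreal \<alpha> * nu_up \<alpha> g * mu_low \<alpha> f" using UA_gen[OF assms(1) f g(2)] g(1) by simp
      also have "\<dots> \<le> ennreal \<alpha> * 1 * mu_low \<alpha> f" using g(3) by (intro mult_right_mono mult_left_mono) auto
      finally show "x \<le> ennreal \<alpha> * mu_low \<alpha> f" by simp
    qed
    have "ennreal \<alpha> * mu_low \<alpha> f = ennreal \<alpha> * mu_low \<alpha> (zr f)" by (simp add: mu_low_zr[symmetric])
    also have "\<dots> \<le> Sup {pair_int (zr f) g | g. nonneg_meas g \<and> nu_up \<alpha> g \<le> 1}"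
      by (rule LB_A[OF assms(1) fz])
    also have "{pair_int (zr f) g | g. nonneg_meas g \<and> nu_up \<alpha> g \<le> 1} = {pair_int f g | g. nonneg_meas g \<and> nu_up \<alpha> g \<le> 1}"
      by (simp add: pair_int_zr1)
    finally show "ennreal \<alpha> * mu_low \<alpha> f \<le> Sup {pair_int f g | g. nonneg_meas g \<and> nu_up \<alpha> g \<le> 1}" .
  qed
  show "Sup {pair_int f g | g. nonneg_meas g \<and> nu_low \<beta> g \<le> 1} = ennreal \<beta> * mu_up \<beta> f"
  proof (rule antisym)
    show "Sup {pair_int f g | g. nonneg_meas g \<and> nu_low \<beta> g \<le> 1} \<le> ennreal \<beta> * mu_up \<beta> f"
    proof (rule Sup_least)
      fix x assume "x \<in> {pair_int f g | g. nonneg_meas g \<and> nu_low \<beta> g \<le> 1}"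
      then obtain g where g: "x = pair_int f g" "nonneg_meas g" "nu_low \<beta> g \<le> 1" by blast
      have "x \<le> ennreal \<beta> * nu_low \<beta> g * mu_up \<beta> f" using UB_gen[OF assms(2) f g(2)] g(1) by simp
      also have "\<dots> \<le> ennreal \<beta> * 1 * mu_up \<beta> f" using g(3) by (intro mult_right_mono mult_left_mono) auto
      finally show "x \<le> ennreal \<beta> * mu_up \<beta> f" by simp
    qed
    have "ennreal \<beta> * mu_up \<beta> f = ennreal \<beta> * mu_up \<beta> (zr f)" by (simp add: mu_up_zr[symmetric])
    also have "\<dots> \<le> Sup {pair_int (zr f) g | g. nonneg_meas g \<and> nu_low \<beta> g \<le> 1}"
      by (rule LB_B[OF assms(2) fz])
    also have "{pair_int (zr f) g | g. nonneg_meas g \<and> nu_low \<beta> g \<le> 1} = {pair_int f g | g. nonneg_meas g \<and> nu_low \<beta> g \<le> 1}"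
      by (simp add: pair_int_zr1)
    finally show "ennreal \<beta> * mu_up \<beta> f \<le> Sup {pair_int f g | g. nonneg_meas g \<and> nu_low \<beta> g \<le> 1}" .
  qed
next
  fix g assume g: "nonneg_meas g"
  note gz = zr_meas[OF g]
  show "Sup {pair_int f g | f. nonneg_meas f \<and> mu_low \<alpha> f \<le> 1} = ennreal \<alpha> * nu_up \<alpha> g"
  proof (rule antisym)
    show "Sup {pair_int f g | f. nonneg_meas f \<and> mu_low \<alpha> f \<le> 1} \<le> ennreal \<alpha> * nu_up \<alpha> g"
    proof (rule Sup_least)
      fix x assume "x \<in> {pair_int f g | f. nonneg_meas f \<and> mu_low \<alpha> f \<le> 1}"
      then obtain f where f: "x = pair_int f g" "nonneg_meas f" "mu_low \<alpha> f \<le> 1" by blast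
      have "x \<le> ennreal \<alpha> * nu_up \<alpha> g * mu_low \<alpha> f" using UA_gen[OF assms(1) f(2) g] f(1) by simp
      also have "\<dots> \<le> ennreal \<alpha> * nu_up \<alpha> g * 1" using f(3) by (intro mult_left_mono) auto
      finally show "x \<le> ennreal \<alpha> * nu_up \<alpha> g" by simp
    qed
    have "ennreal \<alpha> * nu_up \<alpha> g = ennreal \<alpha> * nu_up \<alpha> (zr g)" by (simp add: nu_up_zr[symmetric])
    also have "\<dots> \<le> Sup {pair_int f (zr g) | f. nonneg_meas f \<and> mu_low \<alpha> f \<le> 1}"
      by (rule LB_conv_A[OF assms(1) gz])
    also have "{pair_int f (zr g) | f. nonneg_meas f \<and> mu_low \<alpha> f \<le> 1} = {pair_int f g | f. nonneg_meas f \<and> mu_low \<alpha> f \<le> 1}"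
      by (simp add: pair_int_zr2)
    finally show "ennreal \<alpha> * nu_up \<alpha> g \<le> Sup {pair_int f g | f. nonneg_meas f \<and> mu_low \<alpha> f \<le> 1}" .
  qed
  show "Sup {pair_int f g | f. nonneg_meas f \<and> mu_up \<beta> f \<le> 1} = ennreal \<beta> * nu_low \<beta> g"
  proof (rule antisym)
    show "Sup {pair_int f g | f. nonneg_meas f \<and> mu_up \<beta> f \<le> 1} \<le> ennreal \<beta> * nu_low \<beta> g"
    proof (rule Sup_least)
      fix x assume "x \<in> {pair_int f g | f. nonneg_meas f \<and> mu_up \<beta> f \<le> 1}"
      then obtain f where f: "x = pair_int f g" "nonneg_meas f" "mu_up \<beta> f \<le> 1" by blast
      have "x \<le> ennreal \<beta> * nu_low \<beta> g * mu_up \<beta> f" using UB_gen[OF assms(2) f(2) g] f(1) by simp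
      also have "\<dots> \<le> ennreal \<beta> * nu_low \<beta> g * 1" using f(3) by (intro mult_left_mono) auto
      finally show "x \<le> ennreal \<beta> * nu_low \<beta> g" by simp
    qed
    have "ennreal \<beta> * nu_low \<beta> g = ennreal \<beta> * nu_low \<beta> (zr g)" by (simp add: nu_low_zr[symmetric])
    also have "\<dots> \<le> Sup {pair_int f (zr g) | f. nonneg_meas f \<and> mu_up \<beta> f \<le> 1}"
      by (rule LB_conv_B[OF assms(2) gz])
    also have "{pair_int f (zr g) | f. nonneg_meas f \<and> mu_up \<beta> f \<le> 1} = {pair_int f g | f. nonneg_meas f \<and> mu_up \<beta> f \<le> 1}"
      by (simp add: pair_int_zr2)
    finally show "ennreal \<beta> * nu_low \<beta> g \<le> Sup {pair_int f g | f. nonneg_meas f \<and> mu_up \<beta> f \<le> 1}" .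
  qed
qed


end
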